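(* Let $\mathcal J_N$ be the ideal of the closed embedding $i_N=(\pi_N,\varphi_N):\mathcal M(N,K)\hookrightarrow L^-\mathrm{GL}_K\times L^-\mathrm{GL}_1$, and let $\Delta^N:R\to R^{\otimes N}$, $R=\mathbb C[L^-\mathrm{GL}_K\times L^-\mathrm{GL}_1]$, be the iterated coproduct (pullback along the $N$-fold group multiplication). Then $$\mathcal J_N=(\Delta^N)^{-1}\left(\sum_{i=1}^NR^{\otimes(i-1)}\otimes\mathcal J_1\otimes R^{\otimes(N-i)}\right).$$
   Context: $\mathcal M(N,K)=\mathrm{Rep}(N,K)/\!/\mathrm{GL}_N$, with $\mathrm{Rep}(N,K)$ the triples $(B,\psi,\overline\psi)$, $B\in\mathrm{Mat}_{N\times N}(\mathbb C)$, $\psi\in\mathrm{Mat}_{N\times K}$, $\overline\psi\in\mathrm{Mat}_{K\times N}$, and $g\cdot(B,\psi,\overline\psi)=(gBg^{-1},g\psi,\overline\psi g^{-1})$. $\widetilde B=B+\psi\overline\psi$. $L^-\mathrm{GL}_K$ is the group scheme of series $1+\sum_{i\ge1}g_iz^{-i}$, $g_i\in\mathfrak{gl}_K$ (similarly $L^-\mathrm{GL}_1$). $\pi_N(B,\psi,\overline\psi)=1+\overline\psi(z-\widetilde B/2)^{-1}\psi$ and $\varphi_N(B,\psi,\overline\psi)=z^{-N}\det(z-\widetilde B)$; $i_N$ is a closed embedding. *)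

theory Defs
  imports Complex_Main "Jordan_Normal_Form.Char_Poly"
begin

(* A point of L^-GL_K x L^-GL_1: (x, h), where x i a b is the (a,b) entry of the
   coefficient g_i of z^{-i} (i >= 1, a,b < K) and h i is the coefficient of z^{-i} (i >= 1).
   Coordinates with i = 0 or a,b >= K are junk and never used. *)
type_synonym point = "(nat \<Rightarrow> nat \<Rightarrow> nat \<Rightarrow> complex) \<times> (nat \<Rightarrow> complex)"

inductive_set polyfun :: "('p \<Rightarrow> complex) set \<Rightarrow> ('p \<Rightarrow> complex) set" for C where
  pf_const: "(\<lambda>_. c) \<in> polyfun C"
| pf_coord: "f \<in> C \<Longrightarrow> f \<in> polyfun C"
| pf_add: "f \<in> polyfun C \<Longrightarrow> g \<in> polyfun C \<Longrightarrow> (\<lambda>p. f p + g p) \<in> polyfun C"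
| pf_mult: "f \<in> polyfun C \<Longrightarrow> g \<in> polyfun C \<Longrightarrow> (\<lambda>p. f p * g p) \<in> polyfun C"

inductive_set ideal_gen :: "('p \<Rightarrow> complex) set \<Rightarrow> ('p \<Rightarrow> complex) set \<Rightarrow> ('p \<Rightarrow> complex) set"
  for A S where
  ig_zero: "(\<lambda>_. 0) \<in> ideal_gen A S"
| ig_mult: "r \<in> A \<Longrightarrow> s \<in> S \<Longrightarrow> (\<lambda>p. r p * s p) \<in> ideal_gen A S"
| ig_add: "f \<in> ideal_gen A S \<Longrightarrow> g \<in> ideal_gen A S \<Longrightarrow> (\<lambda>p. f p + g p) \<in> ideal_gen A S"

definition coordsR :: "nat \<Rightarrow> (point \<Rightarrow> complex) set" where
  "coordsR K = {(\<lambda>(x,h). x i a b) | i a b. 1 \<le> i \<and> a < K \<and> b < K}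
             \<union> {(\<lambda>(x,h). h i) | i. 1 \<le> i}"

definition ringR :: "nat \<Rightarrow> (point \<Rightarrow> complex) set" where
  "ringR K = polyfun (coordsR K)"

definition coordsN :: "nat \<Rightarrow> nat \<Rightarrow> ((nat \<Rightarrow> point) \<Rightarrow> complex) set" where
  "coordsN K N = {(\<lambda>P. c (P j)) | c j. c \<in> coordsR K \<and> j < N}"

(* R^{\<otimes> N}, realized as polynomial functions on the N-fold product *)
definition ringRN :: "nat \<Rightarrow> nat \<Rightarrow> ((nat \<Rightarrow> point) \<Rightarrow> complex) set" where
  "ringRN K N = polyfun (coordsN K N)"

definition serK :: "(nat \<Rightarrow> nat \<Rightarrow> nat \<Rightarrow> complex) \<Rightarrow> nat \<Rightarrow> nat \<Rightarrow> nat \<Rightarrow> complex" where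
  "serK x i a b = (if i = 0 then (if a = b then 1 else 0) else x i a b)"

definition ser1 :: "(nat \<Rightarrow> complex) \<Rightarrow> nat \<Rightarrow> complex" where
  "ser1 h i = (if i = 0 then 1 else h i)"

definition mulG :: "nat \<Rightarrow> point \<Rightarrow> point \<Rightarrow> point" where
  "mulG K p q = (case p of (x,h) \<Rightarrow> case q of (y,k) \<Rightarrow>
     ((\<lambda>n a b. \<Sum>i\<le>n. \<Sum>c<K. serK x i a c * serK y (n - i) c b),
      (\<lambda>n. \<Sum>i\<le>n. ser1 h i * ser1 k (n - i))))"

definition unitG :: point where
  "unitG = ((\<lambda>i a b. 0), (\<lambda>i. 0))"

primrec multN :: "nat \<Rightarrow> nat \<Rightarrow> (nat \<Rightarrow> point) \<Rightarrow> point" where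
  "multN K 0 P = unitG"
| "multN K (Suc n) P = mulG K (multN K n P) (P n)"

definition DeltaN :: "nat \<Rightarrow> nat \<Rightarrow> (point \<Rightarrow> complex) \<Rightarrow> ((nat \<Rightarrow> point) \<Rightarrow> complex)" where
  "DeltaN K N f = (\<lambda>P. f (multN K N P))"

definition Btil :: "complex mat \<Rightarrow> complex mat \<Rightarrow> complex mat \<Rightarrow> complex mat" where
  "Btil B psi psib = B + psi * psib"

(* pi_N = 1 + psib (z - Bt/2)^{-1} psi = 1 + sum_{i>=1} psib (Bt/2)^(i-1) psi z^{-i};
   phi_N = z^{-N} det(z - Bt) = sum_{i=0}^N coeff(charpoly Bt, N-i) z^{-i} *)
definition iN :: "nat \<Rightarrow> nat \<Rightarrow> complex mat \<Rightarrow> complex mat \<Rightarrow> complex mat \<Rightarrow> point" where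
  "iN N K B psi psib =
     ((\<lambda>i a b. if 1 \<le> i \<and> a < K \<and> b < K
               then (psib * (((1/2) \<cdot>\<^sub>m Btil B psi psib) ^\<^sub>m (i - 1)) * psi) $$ (a, b)
               else 0),
      (\<lambda>i. if i \<le> N then coeff (char_poly (Btil B psi psib)) (N - i) else 0))"

(* J_N: ideal of the closed embedding i_N, i.e. kernel of i_N^* : R -> C[M(N,K)];
   since C[M(N,K)] = C[Rep(N,K)]^{GL_N} embeds in C[Rep(N,K)], this is the set of
   f in R vanishing on i_N(Rep(N,K)). *)
definition idealJ :: "nat \<Rightarrow> nat \<Rightarrow> (point \<Rightarrow> complex) set" where
  "idealJ N K = {f \<in> ringR K. \<forall>B psi psib.
      B \<in> carrier_mat N N \<and> psi \<in> carrier_mat N K \<and> psib \<in> carrier_mat K N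
      \<longrightarrow> f (iN N K B psi psib) = 0}"

definition sumJ1 :: "nat \<Rightarrow> nat \<Rightarrow> ((nat \<Rightarrow> point) \<Rightarrow> complex) set" where
  "sumJ1 K N = ideal_gen (ringRN K N) {(\<lambda>P. g (P j)) | g j. g \<in> idealJ 1 K \<and> j < N}"

end

theory Submission
  imports Defs "Jordan_Normal_Form.Schur_Decomposition"
begin


definition validEq :: "nat \<Rightarrow> point \<Rightarrow> point \<Rightarrow> bool" where
  "validEq K p q \<longleftrightarrow> (\<forall>i a b. 1 \<le> i \<longrightarrow> a < K \<longrightarrow> b < K \<longrightarrow> fst p i a b = fst q i a b)
      \<and> (\<forall>i. 1 \<le> i \<longrightarrow> snd p i = snd q i)"

lemma validEq_refl[simp]: "validEq K p p" unfolding validEq_def by auto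
lemma validEq_sym: "validEq K p q \<Longrightarrow> validEq K q p" unfolding validEq_def by auto
lemma validEq_trans: "validEq K p q \<Longrightarrow> validEq K q r \<Longrightarrow> validEq K p r" unfolding validEq_def by auto

lemma ringR_validEq: assumes "f \<in> ringR K" "validEq K p q" shows "f p = f q"
  using assms(1) unfolding ringR_def
proof (induction rule: polyfun.induct)
  case (pf_coord f)
  then show ?case using assms(2) unfolding coordsR_def validEq_def
    by (auto split: prod.splits)
qed auto

lemma polyfun_comp:
  assumes "f \<in> polyfun C" "\<And>c. c \<in> C \<Longrightarrow> (\<lambda>x. c (\<Phi> x)) \<in> polyfun C'"
  shows "(\<lambda>x. f (\<Phi> x)) \<in> polyfun C'"
  using assms(1)
proof (induction rule: polyfun.induct)
  case (pf_const c) then show ?case by (rule polyfun.pf_const)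
next
  case (pf_coord f) then show ?case using assms(2) by auto
next
  case (pf_add f g) then show ?case using polyfun.pf_add by fastforce
next
  case (pf_mult f g) then show ?case using polyfun.pf_mult by fastforce
qed

lemma polyfun_mono: assumes "C \<subseteq> C'" shows "polyfun C \<subseteq> polyfun C'"
proof
  fix f assume "f \<in> polyfun C" then show "f \<in> polyfun C'"
    by (induction rule: polyfun.induct) (use assms in \<open>auto intro: polyfun.intros\<close>)
qed

lemma polyfun_sum: assumes "finite I" "\<And>i. i \<in> I \<Longrightarrow> g i \<in> polyfun C"
  shows "(\<lambda>x. \<Sum>i\<in>I. g i x) \<in> polyfun C"
  using assms
proof (induction rule: finite_induct)
  case empty then show ?case using polyfun.pf_const[of 0 C] by simp
next
  case (insert i I)
  then show ?case using polyfun.pf_add[of "g i" C "\<lambda>x. \<Sum>i\<in>I. g i x"] by simp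
qed

lemma polyfun_empty: assumes "f \<in> polyfun {}" shows "\<exists>c. f = (\<lambda>_. c)"
  using assms by (induction rule: polyfun.induct) auto

lemma polyfun_scale: "f \<in> polyfun C \<Longrightarrow> (\<lambda>x. c * f x) \<in> polyfun C"
  using polyfun.pf_mult[OF polyfun.pf_const[of c C]] by blast

lemma polyfun_diff: "f \<in> polyfun C \<Longrightarrow> g \<in> polyfun C \<Longrightarrow> (\<lambda>x. f x - g x) \<in> polyfun C"
  using polyfun.pf_add[of f C "\<lambda>x. (-1) * g x"] polyfun_scale[of g C "-1"] by simp

lemma ideal_gen_mult:
  assumes Amult: "\<And>r s. r \<in> A \<Longrightarrow> s \<in> A \<Longrightarrow> (\<lambda>p. r p * s p) \<in> A"
    and "f \<in> ideal_gen A S" "r \<in> A"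
  shows "(\<lambda>p. r p * f p) \<in> ideal_gen A S"
  using assms(2)
proof (induction rule: ideal_gen.induct)
  case ig_zero then show ?case using ideal_gen.ig_zero by simp
next
  case (ig_mult r' s)
  have "(\<lambda>p. (\<lambda>p. r p * r' p) p * s p) \<in> ideal_gen A S"
    by (rule ideal_gen.ig_mult[OF Amult[OF assms(3) ig_mult(1)] ig_mult(2)])
  then show ?case by (simp add: mult.assoc)
next
  case (ig_add f g)
  have "(\<lambda>p. (\<lambda>p. r p * f p) p + (\<lambda>p. r p * g p) p) \<in> ideal_gen A S"
    by (rule ideal_gen.ig_add[OF ig_add(3,4)])
  then show ?case by (simp add: distrib_left)
qed

lemma ideal_gen_sum: assumes "finite I" "\<And>i. i \<in> I \<Longrightarrow> g i \<in> ideal_gen A S"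
  shows "(\<lambda>x. \<Sum>i\<in>I. g i x) \<in> ideal_gen A S"
  using assms
proof (induction rule: finite_induct)
  case empty then show ?case using ideal_gen.ig_zero by simp
next
  case (insert i I)
  then show ?case using ideal_gen.ig_add[of "g i" A S "\<lambda>x. \<Sum>i\<in>I. g i x"] by simp
qed

definition Yset :: "nat \<Rightarrow> point set" where
  "Yset K = {p. \<exists>B psi psib. B \<in> carrier_mat 1 1 \<and> psi \<in> carrier_mat 1 K \<and> psib \<in> carrier_mat K 1
      \<and> validEq K p (iN 1 K B psi psib)}"

definition YN :: "nat \<Rightarrow> nat \<Rightarrow> (nat \<Rightarrow> point) set" where
  "YN K N = {P. \<forall>j<N. P j \<in> Yset K}"

lemma Yset_ne: "iN 1 K (0\<^sub>m 1 1) (0\<^sub>m 1 K) (0\<^sub>m K 1) \<in> Yset K"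
  unfolding Yset_def
  by (intro CollectI exI[of _ "0\<^sub>m 1 1"] exI[of _ "0\<^sub>m 1 K"] exI[of _ "0\<^sub>m K 1"] conjI validEq_refl zero_carrier_mat)

lemma iN1_Yset: assumes c: "B \<in> carrier_mat 1 1" "psi \<in> carrier_mat 1 K" "psib \<in> carrier_mat K 1"
  shows "iN 1 K B psi psib \<in> Yset K" unfolding Yset_def using c validEq_refl by blast

lemma idealJ1_iff: "g \<in> idealJ 1 K \<longleftrightarrow> g \<in> ringR K \<and> (\<forall>p\<in>Yset K. g p = 0)"
proof
  assume g: "g \<in> idealJ 1 K"
  then have gR: "g \<in> ringR K" unfolding idealJ_def by blast
  have "g p = 0" if "p \<in> Yset K" for p
  proof -
    from that obtain B psi psib where c: "B \<in> carrier_mat 1 1" "psi \<in> carrier_mat 1 K" "psib \<in> carrier_mat K 1"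
      and v: "validEq K p (iN 1 K B psi psib)" unfolding Yset_def by blast
    have "g p = g (iN 1 K B psi psib)" by (rule ringR_validEq[OF gR v])
    also have "\<dots> = 0" using g c unfolding idealJ_def by simp
    finally show ?thesis .
  qed
  then show "g \<in> ringR K \<and> (\<forall>p\<in>Yset K. g p = 0)" using gR by blast
next
  assume a: "g \<in> ringR K \<and> (\<forall>p\<in>Yset K. g p = 0)"
  then have gR: "g \<in> ringR K" by simp
  have "g (iN 1 K B psi psib) = 0" if "B \<in> carrier_mat 1 1" "psi \<in> carrier_mat 1 K" "psib \<in> carrier_mat K 1" for B psi psib
    using a iN1_Yset[OF that] by simp
  then show "g \<in> idealJ 1 K" unfolding idealJ_def using gR by simp
qed

definition ringFrom :: "nat \<Rightarrow> nat \<Rightarrow> nat \<Rightarrow> ((nat \<Rightarrow> point) \<Rightarrow> complex) set" where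
  "ringFrom K N j = polyfun {(\<lambda>P. c (P i)) | c i. c \<in> coordsR K \<and> j \<le> i \<and> i < N}"

lemma ringFrom_0: "ringFrom K N 0 = ringRN K N"
  unfolding ringFrom_def ringRN_def coordsN_def by simp

lemma ringFrom_sub: assumes "j \<le> j'" shows "ringFrom K N j' \<subseteq> ringFrom K N j"
  unfolding ringFrom_def
proof (rule polyfun_mono, rule subsetI)
  fix x assume "x \<in> {(\<lambda>P. c (P i)) | c i. c \<in> coordsR K \<and> j' \<le> i \<and> i < N}"
  then obtain c i where "x = (\<lambda>P. c (P i))" "c \<in> coordsR K" "j' \<le> i" "i < N" by auto
  then show "x \<in> {(\<lambda>P. c (P i)) | c i. c \<in> coordsR K \<and> j \<le> i \<and> i < N}"
    using assms by (intro CollectI exI[of _ c] exI[of _ i]) auto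
qed

lemma ringFrom_RN: "ringFrom K N j \<subseteq> ringRN K N"
  using ringFrom_sub[of 0 j K N] ringFrom_0 by auto

lemma ringFrom_indep: assumes "F \<in> ringFrom K N j" "l < j" shows "F (P(l := v)) = F P"
  using assms(1) unfolding ringFrom_def
proof (induction rule: polyfun.induct)
  case (pf_coord f)
  then obtain c i where "f = (\<lambda>P. c (P i))" "j \<le> i" by auto
  then show ?case using assms(2) by simp
qed simp_all

lemma ringFrom_top: assumes "F \<in> ringFrom K N j" "N \<le> j" shows "\<exists>c. F = (\<lambda>_. c)"
proof -
  have "{(\<lambda>P. c (P i)) | c i. c \<in> coordsR K \<and> j \<le> i \<and> i < N} = {}" using assms(2) by auto
  then show ?thesis using assms(1) polyfun_empty unfolding ringFrom_def by metis
qed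

lemma ringRN_mult: "r \<in> ringRN K N \<Longrightarrow> s \<in> ringRN K N \<Longrightarrow> (\<lambda>p. r p * s p) \<in> ringRN K N"
  unfolding ringRN_def by (rule polyfun.pf_mult)

lemma slot_in_ringFrom: assumes "m \<in> ringR K" "j \<le> i" "i < N"
  shows "(\<lambda>P. m (P i)) \<in> ringFrom K N j"
  unfolding ringFrom_def
  by (rule polyfun_comp[where \<Phi>="\<lambda>P. P i", OF assms(1)[unfolded ringR_def]])
     (use assms in \<open>auto intro!: polyfun.pf_coord\<close>)

lemma slot_in_ringRN: assumes "m \<in> ringR K" "i < N"
  shows "(\<lambda>P. m (P i)) \<in> ringRN K N"
  using slot_in_ringFrom[OF assms(1) _ assms(2), of 0] ringFrom_0 by auto

lemma sum_list_prod_concat: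
  fixes f :: "'a \<Rightarrow> complex" and g :: "'b \<Rightarrow> complex"
  shows "(\<Sum>x\<leftarrow>L1. f x) * (\<Sum>y\<leftarrow>L2. g y) = (\<Sum>z\<leftarrow>concat (map (\<lambda>x. map (\<lambda>y. (x,y)) L2) L1). f (fst z) * g (snd z))"
  by (induction L1) (simp_all add: distrib_right sum_list_const_mult comp_def)

lemma ringFrom_rep:
  assumes "F \<in> ringFrom K N j" "j < N"
  shows "\<exists>L. (\<forall>x\<in>set L. fst x \<in> ringR K \<and> snd x \<in> ringFrom K N (Suc j))
          \<and> F = (\<lambda>P. \<Sum>x\<leftarrow>L. fst x (P j) * snd x P)"
  using assms(1) unfolding ringFrom_def[of K N j]
proof (induction rule: polyfun.induct)
  case (pf_const c)
  show ?case
    by (rule exI[of _ "[(\<lambda>_. c, \<lambda>_. 1)]"])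
       (auto simp: ringR_def ringFrom_def intro: polyfun.pf_const)
next
  case (pf_coord f)
  then obtain c i where f: "f = (\<lambda>P. c (P i))" "c \<in> coordsR K" "j \<le> i" "i < N" by auto
  show ?case
  proof (cases "i = j")
    case True
    show ?thesis
      by (rule exI[of _ "[(c, \<lambda>_. 1)]"])
         (use f True in \<open>auto simp: ringR_def ringFrom_def intro: polyfun.pf_const polyfun.pf_coord\<close>)
  next
    case False
    have "f \<in> ringFrom K N (Suc j)" unfolding ringFrom_def
      by (rule polyfun.pf_coord, rule CollectI, rule exI[of _ c], rule exI[of _ i]) (use f False in auto)
    then show ?thesis
      by (intro exI[of _ "[(\<lambda>_. 1, f)]"])
         (auto simp: ringR_def intro!: polyfun.pf_const)
  qed
next
  case (pf_add f g)
  then obtain L1 L2 where L1: "\<forall>x\<in>set L1. fst x \<in> ringR K \<and> snd x \<in> ringFrom K N (Suc j)"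
      "f = (\<lambda>P. \<Sum>x\<leftarrow>L1. fst x (P j) * snd x P)"
    and L2: "\<forall>x\<in>set L2. fst x \<in> ringR K \<and> snd x \<in> ringFrom K N (Suc j)"
      "g = (\<lambda>P. \<Sum>x\<leftarrow>L2. fst x (P j) * snd x P)" by blast
  show ?case by (rule exI[of _ "L1 @ L2"]) (use L1 L2 in auto)
next
  case (pf_mult f g)
  then obtain L1 L2 where L1: "\<forall>x\<in>set L1. fst x \<in> ringR K \<and> snd x \<in> ringFrom K N (Suc j)"
      "f = (\<lambda>P. \<Sum>x\<leftarrow>L1. fst x (P j) * snd x P)"
    and L2: "\<forall>x\<in>set L2. fst x \<in> ringR K \<and> snd x \<in> ringFrom K N (Suc j)"
      "g = (\<lambda>P. \<Sum>x\<leftarrow>L2. fst x (P j) * snd x P)" by blast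
  define L where "L = map (\<lambda>z. (\<lambda>p. fst (fst z) p * fst (snd z) p, \<lambda>P. snd (fst z) P * snd (snd z) P))
     (concat (map (\<lambda>x. map (\<lambda>y. (x,y)) L2) L1))"
  have "\<forall>x\<in>set L. fst x \<in> ringR K \<and> snd x \<in> ringFrom K N (Suc j)"
    using L1(1) L2(1) unfolding L_def ringR_def ringFrom_def[of K N "Suc j"]
    by (auto intro!: polyfun.pf_mult)
  moreover have "(\<lambda>P. f P * g P) = (\<lambda>P. \<Sum>x\<leftarrow>L. fst x (P j) * snd x P)"
  proof
    fix P
    have "f P * g P = (\<Sum>z\<leftarrow>concat (map (\<lambda>x. map (\<lambda>y. (x,y)) L2) L1).
        (fst (fst z) (P j) * snd (fst z) P) * (fst (snd z) (P j) * snd (snd z) P))"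
      unfolding L1(2) L2(2) by (rule sum_list_prod_concat)
    also have "\<dots> = (\<Sum>x\<leftarrow>L. fst x (P j) * snd x P)"
      unfolding L_def by (simp add: comp_def mult_ac)
    finally show "f P * g P = (\<Sum>x\<leftarrow>L. fst x (P j) * snd x P)" .
  qed
  ultimately show ?case by blast
qed


lemma YN_ne: "(\<lambda>_. iN 1 K (0\<^sub>m 1 1) (0\<^sub>m 1 K) (0\<^sub>m K 1)) \<in> YN K N"
  unfolding YN_def using Yset_ne by simp

lemma sumJ1_gen: assumes "g \<in> idealJ 1 K" "j < N" "r \<in> ringRN K N"
  shows "(\<lambda>P. r P * g (P j)) \<in> sumJ1 K N"
  unfolding sumJ1_def
  by (rule ideal_gen.ig_mult[OF assms(3)]) (use assms in auto)

lemma sumJ1_mult: assumes "f \<in> sumJ1 K N" "r \<in> ringRN K N"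
  shows "(\<lambda>P. r P * f P) \<in> sumJ1 K N"
  unfolding sumJ1_def
proof (rule ideal_gen_mult)
  show "\<And>r s. r \<in> ringRN K N \<Longrightarrow> s \<in> ringRN K N \<Longrightarrow> (\<lambda>p. r p * s p) \<in> ringRN K N"
    by (rule ringRN_mult)
qed (use assms in \<open>simp_all add: sumJ1_def\<close>)

lemma reduce:
  assumes IH: "\<And>G. G \<in> ringFrom K N (Suc j) \<Longrightarrow> (\<forall>P\<in>YN K N. G P = 0) \<Longrightarrow> G \<in> sumJ1 K N"
    and jN: "j < N"
  shows "finite I \<Longrightarrow> (\<forall>k\<in>I. m k \<in> ringR K \<and> a k \<in> ringFrom K N (Suc j))
     \<Longrightarrow> (\<forall>P\<in>YN K N. (\<Sum>k\<in>I. m k (P j) * a k P) = 0)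
     \<Longrightarrow> (\<lambda>P. \<Sum>k\<in>I. m k (P j) * a k P) \<in> sumJ1 K N"
proof (induction "card I" arbitrary: I a rule: less_induct)
  case less
  show ?case
  proof (cases "\<exists>c k0. k0 \<in> I \<and> c k0 \<noteq> 0 \<and> (\<forall>y\<in>Yset K. (\<Sum>k\<in>I. c k * m k y) = 0)")
    case True
    then obtain c k0 where k0: "k0 \<in> I" "c k0 \<noteq> 0"
      and dep: "\<forall>y\<in>Yset K. (\<Sum>k\<in>I. c k * m k y) = 0" by blast
    define q where "q = (\<lambda>k. c k / c k0)"
    have q0: "q k0 = 1" unfolding q_def using k0(2) by simp
    define g where "g = (\<lambda>p. \<Sum>k\<in>I. q k * m k p)"
    define a' where "a' = (\<lambda>k P. a k P - q k * a k0 P)"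
    define I' where "I' = I - {k0}"
    have mR: "\<And>k. k \<in> I \<Longrightarrow> m k \<in> ringR K" and aR: "\<And>k. k \<in> I \<Longrightarrow> a k \<in> ringFrom K N (Suc j)"
      using less.prems(2) by auto
    have gR: "g \<in> ringR K" unfolding g_def ringR_def
      by (rule polyfun_sum[OF less.prems(1)], rule polyfun_scale) (use mR in \<open>auto simp: ringR_def\<close>)
    have gY: "\<forall>p\<in>Yset K. g p = 0"
    proof
      fix p assume "p \<in> Yset K"
      then have "(\<Sum>k\<in>I. c k * m k p) = 0" using dep by blast
      then have "(\<Sum>k\<in>I. c k * m k p) / c k0 = 0" by simp
      then show "g p = 0" unfolding g_def q_def by (simp add: sum_divide_distrib)
    qed
    have gJ: "g \<in> idealJ 1 K" using idealJ1_iff gR gY by blast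
    have eq: "(\<Sum>k\<in>I. m k (P j) * a k P) = (\<Sum>k\<in>I'. m k (P j) * a' k P) + g (P j) * a k0 P" for P
    proof -
      have 1: "(\<Sum>k\<in>I'. m k (P j) * a' k P) = (\<Sum>k\<in>I'. m k (P j) * a k P) - (\<Sum>k\<in>I'. q k * m k (P j)) * a k0 P"
        unfolding a'_def by (simp add: right_diff_distrib sum_subtractf sum_distrib_right sum_distrib_left mult_ac)
      have 2: "g (P j) = q k0 * m k0 (P j) + (\<Sum>k\<in>I'. q k * m k (P j))"
        unfolding g_def I'_def using less.prems(1) k0(1) by (simp add: sum.remove)
      have 3: "(\<Sum>k\<in>I. m k (P j) * a k P) = m k0 (P j) * a k0 P + (\<Sum>k\<in>I'. m k (P j) * a k P)"
        unfolding I'_def using less.prems(1) k0(1) by (simp add: sum.remove)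
      show ?thesis unfolding 1 2 3 q0 by (simp add: algebra_simps)
    qed
    have part1: "(\<lambda>P. \<Sum>k\<in>I'. m k (P j) * a' k P) \<in> sumJ1 K N"
    proof (rule less.hyps)
      show "card I' < card I" unfolding I'_def using card_Diff1_less[OF less.prems(1) k0(1)] .
      show "finite I'" unfolding I'_def using less.prems(1) by simp
      show "\<forall>k\<in>I'. m k \<in> ringR K \<and> a' k \<in> ringFrom K N (Suc j)"
      proof
        fix k assume k: "k \<in> I'"
        then have kI: "k \<in> I" unfolding I'_def by simp
        have "a' k \<in> ringFrom K N (Suc j)" unfolding a'_def ringFrom_def
          by (rule polyfun_diff[OF aR[OF kI, unfolded ringFrom_def] polyfun_scale[OF aR[OF k0(1), unfolded ringFrom_def]]])
        then show "m k \<in> ringR K \<and> a' k \<in> ringFrom K N (Suc j)" using mR[OF kI] by simp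
      qed
      show "\<forall>P\<in>YN K N. (\<Sum>k\<in>I'. m k (P j) * a' k P) = 0"
      proof
        fix P assume P: "P \<in> YN K N"
        then have "P j \<in> Yset K" using jN unfolding YN_def by simp
        then have "g (P j) = 0" using gY by blast
        then show "(\<Sum>k\<in>I'. m k (P j) * a' k P) = 0" using eq[of P] less.prems(3) P by simp
      qed
    qed
    have part2: "(\<lambda>P. a k0 P * g (P j)) \<in> sumJ1 K N"
      by (rule sumJ1_gen[OF gJ jN]) (use aR[OF k0(1)] ringFrom_RN in blast)
    have "(\<lambda>P. (\<lambda>P. \<Sum>k\<in>I'. m k (P j) * a' k P) P + (\<lambda>P. a k0 P * g (P j)) P) \<in> sumJ1 K N"
      unfolding sumJ1_def by (rule ideal_gen.ig_add[OF part1[unfolded sumJ1_def] part2[unfolded sumJ1_def]])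
    then show ?thesis using eq by (simp add: mult.commute)
  next
    case False
    then have indep: "\<And>c. (\<forall>y\<in>Yset K. (\<Sum>k\<in>I. c k * m k y) = 0) \<Longrightarrow> \<forall>k\<in>I. c k = 0" by blast
    have az: "a k P = 0" if k: "k \<in> I" and P: "P \<in> YN K N" for k P
    proof -
      have "\<forall>y\<in>Yset K. (\<Sum>k\<in>I. a k P * m k y) = 0"
      proof
        fix y assume y: "y \<in> Yset K"
        have P': "P(j := y) \<in> YN K N" using P y unfolding YN_def by auto
        have "(\<Sum>k\<in>I. a k P * m k y) = (\<Sum>k\<in>I. m k ((P(j:=y)) j) * a k (P(j:=y)))"
        proof (rule sum.cong)
          fix k assume "k \<in> I"
          then have "a k (P(j:=y)) = a k P" using less.prems(2) ringFrom_indep[of "a k" K N "Suc j" j P y] by auto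
          then show "a k P * m k y = m k ((P(j:=y)) j) * a k (P(j:=y))" by simp
        qed simp
        also have "\<dots> = 0" using less.prems(3) P' by blast
        finally show "(\<Sum>k\<in>I. a k P * m k y) = 0" .
      qed
      then show "a k P = 0" using indep[of "\<lambda>k. a k P"] k by blast
    qed
    have "(\<lambda>P. m k (P j) * a k P) \<in> sumJ1 K N" if k: "k \<in> I" for k
    proof (rule sumJ1_mult)
      show "a k \<in> sumJ1 K N" using IH less.prems(2) az k by blast
      show "(\<lambda>P. m k (P j)) \<in> ringRN K N" using slot_in_ringRN less.prems(2) k jN by blast
    qed
    then show ?thesis unfolding sumJ1_def by (rule ideal_gen_sum[OF less.prems(1), unfolded sumJ1_def])
  qed
qed

lemma tensor: "F \<in> ringFrom K N j \<Longrightarrow> (\<forall>P\<in>YN K N. F P = 0) \<Longrightarrow> F \<in> sumJ1 K N"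
proof (induction "N - j" arbitrary: j F)
  case 0
  then obtain c where c: "F = (\<lambda>_. c)" using ringFrom_top[of F K N j] by auto
  have "F (\<lambda>_. iN 1 K (0\<^sub>m 1 1) (0\<^sub>m 1 K) (0\<^sub>m K 1)) = 0" using 0(3) YN_ne[of K N] by simp
  then have "c = 0" unfolding c by simp
  then show ?case using c ideal_gen.ig_zero unfolding sumJ1_def by simp
next
  case (Suc d)
  then have jN: "j < N" by simp
  obtain L where L: "\<forall>x\<in>set L. fst x \<in> ringR K \<and> snd x \<in> ringFrom K N (Suc j)"
      and F: "F = (\<lambda>P. \<Sum>x\<leftarrow>L. fst x (P j) * snd x P)"
    using ringFrom_rep[OF Suc(3) jN] by blast
  have F': "F = (\<lambda>P. \<Sum>k\<in>{..<length L}. fst (L!k) (P j) * snd (L!k) P)"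
    unfolding F by (simp add: sum_list_sum_nth atLeast0LessThan)
  have IH: "\<And>G. G \<in> ringFrom K N (Suc j) \<Longrightarrow> (\<forall>P\<in>YN K N. G P = 0) \<Longrightarrow> G \<in> sumJ1 K N"
    using Suc(1)[of "Suc j"] Suc(2) by simp
  show ?case unfolding F'
  proof (rule reduce[OF IH jN])
    show "\<forall>k\<in>{..<length L}. fst (L ! k) \<in> ringR K \<and> snd (L ! k) \<in> ringFrom K N (Suc j)"
      using L by simp
    show "\<forall>P\<in>YN K N. (\<Sum>k<length L. fst (L ! k) (P j) * snd (L ! k) P) = 0"
      using Suc(4) unfolding F' by simp
    show "finite {..<length L}" by simp
  qed
qed


lemma mult_entry: assumes "A \<in> carrier_mat m n" "B \<in> carrier_mat n p" "i < m" "j < p"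
  shows "(A * B) $$ (i,j) = (\<Sum>k<n. A $$ (i,k) * B $$ (k,j))"
  using assms by (simp add: scalar_prod_def atLeast0LessThan)

lemma pow_block:
  fixes A :: "complex mat"
  assumes A: "A \<in> carrier_mat (Suc n) (Suc n)" and A1: "A1 \<in> carrier_mat n n"
    and low: "\<forall>j<n. A $$ (n,j) = 0" and A1A: "\<forall>i<n. \<forall>j<n. A1 $$ (i,j) = A $$ (i,j)"
  shows "(\<forall>i<n. \<forall>j<n. (A ^\<^sub>m p) $$ (i,j) = (A1 ^\<^sub>m p) $$ (i,j))
    \<and> (\<forall>j<n. (A ^\<^sub>m p) $$ (n,j) = 0)
    \<and> (A ^\<^sub>m p) $$ (n,n) = (A $$ (n,n))^p
    \<and> (\<forall>i<n. (A ^\<^sub>m p) $$ (i,n) = (\<Sum>k<p. (\<Sum>l<n. (A1 ^\<^sub>m k) $$ (i,l) * A $$ (l,n)) * (A $$ (n,n))^(p - 1 - k)))"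
proof (induction p)
  case 0
  show ?case using A A1 by auto
next
  case (Suc p)
  let ?a = "A $$ (n,n)"
  have AP: "A ^\<^sub>m p \<in> carrier_mat (Suc n) (Suc n)" using A by simp
  have AS: "A ^\<^sub>m Suc p = A ^\<^sub>m p * A" by simp
  have A1S: "A1 ^\<^sub>m Suc p = A1 ^\<^sub>m p * A1" by simp
  have e: "(A ^\<^sub>m p * A) $$ (i,j) = (\<Sum>k<n. (A ^\<^sub>m p) $$ (i,k) * A $$ (k,j)) + (A ^\<^sub>m p) $$ (i,n) * A $$ (n,j)"
    if "i < Suc n" "j < Suc n" for i j
    by (subst mult_entry[OF AP A that]) simp
  have e1: "(A1 ^\<^sub>m p * A1) $$ (i,j) = (\<Sum>k<n. (A1 ^\<^sub>m p) $$ (i,k) * A1 $$ (k,j))"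
    if "i < n" "j < n" for i j
    by (rule mult_entry[OF _ A1 that]) (use A1 in simp)
  have IH1: "\<forall>i<n. \<forall>j<n. (A ^\<^sub>m p) $$ (i,j) = (A1 ^\<^sub>m p) $$ (i,j)" using Suc by blast
  have IH2: "\<forall>j<n. (A ^\<^sub>m p) $$ (n,j) = 0" using Suc by blast
  have IH3: "(A ^\<^sub>m p) $$ (n,n) = ?a^p" using Suc by blast
  have IH4: "\<forall>i<n. (A ^\<^sub>m p) $$ (i,n) = (\<Sum>k<p. (\<Sum>l<n. (A1 ^\<^sub>m k) $$ (i,l) * A $$ (l,n)) * ?a^(p - 1 - k))"
    using Suc by blast
  have C1: "\<forall>i<n. \<forall>j<n. (A ^\<^sub>m Suc p) $$ (i,j) = (A1 ^\<^sub>m Suc p) $$ (i,j)"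
  proof (intro allI impI)
    fix i j assume ij: "i < n" "j < n"
    show "(A ^\<^sub>m Suc p) $$ (i,j) = (A1 ^\<^sub>m Suc p) $$ (i,j)"
      using ij by (simp add: e e1 IH1 A1A low)
  qed
  have C2: "\<forall>j<n. (A ^\<^sub>m Suc p) $$ (n,j) = 0"
    using IH2 low by (simp add: e)
  have C3: "(A ^\<^sub>m Suc p) $$ (n,n) = ?a^Suc p"
    using IH2 IH3 by (simp add: e)
  have C4: "\<forall>i<n. (A ^\<^sub>m Suc p) $$ (i,n) = (\<Sum>k<Suc p. (\<Sum>l<n. (A1 ^\<^sub>m k) $$ (i,l) * A $$ (l,n)) * ?a^(Suc p - 1 - k))"
  proof (intro allI impI)
    fix i assume i: "i < n"
    have "(A ^\<^sub>m Suc p) $$ (i,n) = (\<Sum>l<n. (A1 ^\<^sub>m p) $$ (i,l) * A $$ (l,n))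
        + (\<Sum>k<p. (\<Sum>l<n. (A1 ^\<^sub>m k) $$ (i,l) * A $$ (l,n)) * ?a^(p - 1 - k)) * ?a"
      using i by (simp add: e IH1 IH4)
    also have "(\<Sum>k<p. (\<Sum>l<n. (A1 ^\<^sub>m k) $$ (i,l) * A $$ (l,n)) * ?a^(p - 1 - k)) * ?a
        = (\<Sum>k<p. (\<Sum>l<n. (A1 ^\<^sub>m k) $$ (i,l) * A $$ (l,n)) * ?a^(Suc p - 1 - k))"
      unfolding sum_distrib_right[of _ _ ?a]
    proof (rule sum.cong[OF refl])
      fix k assume "k \<in> {..<p}"
      then have "Suc p - 1 - k = Suc (p - 1 - k)" by auto
      then show "(\<Sum>l<n. (A1 ^\<^sub>m k) $$ (i,l) * A $$ (l,n)) * ?a^(p - 1 - k) * ?a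
         = (\<Sum>l<n. (A1 ^\<^sub>m k) $$ (i,l) * A $$ (l,n)) * ?a^(Suc p - 1 - k)"
        by (simp add: mult_ac)
    qed
    finally show "(A ^\<^sub>m Suc p) $$ (i,n) = (\<Sum>k<Suc p. (\<Sum>l<n. (A1 ^\<^sub>m k) $$ (i,l) * A $$ (l,n)) * ?a^(Suc p - 1 - k))"
      by (simp add: add.commute)
  qed
  show ?case using C1 C2 C3 C4 by blast
qed


lemma trip_entry: assumes "L \<in> carrier_mat r m" "X \<in> carrier_mat m m" "R \<in> carrier_mat m s" "a < r" "b < s"
  shows "(L * X * R) $$ (a,b) = (\<Sum>i<m. \<Sum>j<m. L $$ (a,i) * X $$ (i,j) * R $$ (j,b))"
proof -
  have "(L * X * R) $$ (a,b) = (\<Sum>j<m. (L * X) $$ (a,j) * R $$ (j,b))"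
    by (rule mult_entry[of _ r m]) (use assms in auto)
  also have "\<dots> = (\<Sum>j<m. (\<Sum>i<m. L $$ (a,i) * X $$ (i,j)) * R $$ (j,b))"
    by (rule sum.cong[OF refl]) (subst mult_entry[OF assms(1,2)], use assms in auto)
  also have "\<dots> = (\<Sum>j<m. \<Sum>i<m. L $$ (a,i) * X $$ (i,j) * R $$ (j,b))"
    by (simp add: sum_distrib_right)
  also have "\<dots> = (\<Sum>i<m. \<Sum>j<m. L $$ (a,i) * X $$ (i,j) * R $$ (j,b))"
    by (rule sum.swap)
  finally show ?thesis .
qed

lemma markov_block:
  fixes A :: "complex mat"
  assumes A: "A \<in> carrier_mat (Suc n) (Suc n)" and A1: "A1 \<in> carrier_mat n n"
    and low: "\<forall>j<n. A $$ (n,j) = 0" and A1A: "\<forall>i<n. \<forall>j<n. A1 $$ (i,j) = A $$ (i,j)"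
    and psi: "psi \<in> carrier_mat (Suc n) K" and psib: "psib \<in> carrier_mat K (Suc n)"
    and psi1: "psi1 \<in> carrier_mat n K" and psib1: "psib1 \<in> carrier_mat K n"
    and psi1e: "\<forall>i<n. \<forall>c<K. psi1 $$ (i,c) = psi $$ (i,c)"
    and psib1e: "\<forall>c<K. \<forall>i<n. psib1 $$ (c,i) = psib $$ (c,i)"
    and col: "\<forall>l<n. A $$ (l,n) = (\<Sum>c<K. psi $$ (l,c) * psib $$ (c,n))"
    and ab: "a < K" "b < K"
  shows "(psib * A ^\<^sub>m p * psi) $$ (a,b) = (psib1 * A1 ^\<^sub>m p * psi1) $$ (a,b)
     + (\<Sum>k<p. \<Sum>c<K. (psib1 * A1 ^\<^sub>m k * psi1) $$ (a,c) * (psib $$ (c,n) * (A $$ (n,n))^(p - 1 - k) * psi $$ (n,b)))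
     + psib $$ (a,n) * (A $$ (n,n))^p * psi $$ (n,b)"
proof -
  let ?a = "A $$ (n,n)"
  note PB = pow_block[OF A A1 low A1A, of p]
  have P1: "\<And>i j. i<n \<Longrightarrow> j<n \<Longrightarrow> (A ^\<^sub>m p) $$ (i,j) = (A1 ^\<^sub>m p) $$ (i,j)" using PB by blast
  have P2: "\<And>j. j<n \<Longrightarrow> (A ^\<^sub>m p) $$ (n,j) = 0" using PB by blast
  have P3: "(A ^\<^sub>m p) $$ (n,n) = ?a^p" using PB by blast
  have P4: "\<And>i. i<n \<Longrightarrow> (A ^\<^sub>m p) $$ (i,n) = (\<Sum>k<p. (\<Sum>l<n. (A1 ^\<^sub>m k) $$ (i,l) * A $$ (l,n)) * ?a^(p - 1 - k))"
    using PB by blast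
  define T where "T = (\<lambda>i j. psib $$ (a,i) * (A ^\<^sub>m p) $$ (i,j) * psi $$ (j,b))"
  have "(psib * A ^\<^sub>m p * psi) $$ (a,b) = (\<Sum>i<Suc n. \<Sum>j<Suc n. T i j)"
    unfolding T_def by (rule trip_entry[OF psib _ psi ab]) (use A in simp)
  also have "\<dots> = (\<Sum>i<n. \<Sum>j<n. T i j) + (\<Sum>i<n. T i n) + (\<Sum>j<n. T n j) + T n n"
    by (simp add: sum.distrib)
  also have "(\<Sum>j<n. T n j) = 0" unfolding T_def by (simp add: P2)
  also have "T n n = psib $$ (a,n) * ?a^p * psi $$ (n,b)" unfolding T_def P3 ..
  also have "(\<Sum>i<n. \<Sum>j<n. T i j) = (psib1 * A1 ^\<^sub>m p * psi1) $$ (a,b)"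
  proof -
    have "(psib1 * A1 ^\<^sub>m p * psi1) $$ (a,b) = (\<Sum>i<n. \<Sum>j<n. psib1 $$ (a,i) * (A1 ^\<^sub>m p) $$ (i,j) * psi1 $$ (j,b))"
      by (rule trip_entry[OF psib1 _ psi1 ab]) (use A1 in simp)
    also have "\<dots> = (\<Sum>i<n. \<Sum>j<n. T i j)"
      unfolding T_def using psi1e psib1e ab by (simp add: P1)
    finally show ?thesis by simp
  qed
  also have "(\<Sum>i<n. T i n) = (\<Sum>k<p. \<Sum>c<K. (psib1 * A1 ^\<^sub>m k * psi1) $$ (a,c) * (psib $$ (c,n) * ?a^(p - 1 - k) * psi $$ (n,b)))"
  proof -
    define f where "f = (\<lambda>i k l c. psib $$ (a,i) * (A1 ^\<^sub>m k) $$ (i,l) * psi $$ (l,c) * psib $$ (c,n) * ?a^(p - 1 - k) * psi $$ (n,b))"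
    have "(\<Sum>i<n. T i n) = (\<Sum>i<n. \<Sum>k<p. \<Sum>l<n. \<Sum>c<K. f i k l c)"
    proof (rule sum.cong[OF refl])
      fix i assume "i \<in> {..<n}"
      then have i: "i < n" by simp
      have "T i n = psib $$ (a,i) * (\<Sum>k<p. (\<Sum>l<n. (A1 ^\<^sub>m k) $$ (i,l) * (\<Sum>c<K. psi $$ (l,c) * psib $$ (c,n))) * ?a^(p - 1 - k)) * psi $$ (n,b)"
        unfolding T_def P4[OF i] using col by simp
      also have "\<dots> = (\<Sum>k<p. \<Sum>l<n. \<Sum>c<K. f i k l c)"
        unfolding f_def by (simp add: sum_distrib_left sum_distrib_right mult_ac)
      finally show "T i n = (\<Sum>k<p. \<Sum>l<n. \<Sum>c<K. f i k l c)" .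
    qed
    also have "\<dots> = (\<Sum>k<p. \<Sum>i<n. \<Sum>l<n. \<Sum>c<K. f i k l c)" by (rule sum.swap)
    also have "\<dots> = (\<Sum>k<p. \<Sum>c<K. \<Sum>i<n. \<Sum>l<n. f i k l c)"
    proof (rule sum.cong[OF refl])
      fix k
      have "(\<Sum>i<n. \<Sum>l<n. \<Sum>c<K. f i k l c) = (\<Sum>i<n. \<Sum>c<K. \<Sum>l<n. f i k l c)"
        by (rule sum.cong[OF refl], rule sum.swap)
      also have "\<dots> = (\<Sum>c<K. \<Sum>i<n. \<Sum>l<n. f i k l c)" by (rule sum.swap)
      finally show "(\<Sum>i<n. \<Sum>l<n. \<Sum>c<K. f i k l c) = (\<Sum>c<K. \<Sum>i<n. \<Sum>l<n. f i k l c)" .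
    qed
    also have "\<dots> = (\<Sum>k<p. \<Sum>c<K. (psib1 * A1 ^\<^sub>m k * psi1) $$ (a,c) * (psib $$ (c,n) * ?a^(p - 1 - k) * psi $$ (n,b)))"
    proof (rule sum.cong[OF refl], rule sum.cong[OF refl])
      fix k c assume "c \<in> {..<K}"
      then have c: "c < K" by simp
      have "(psib1 * A1 ^\<^sub>m k * psi1) $$ (a,c) = (\<Sum>i<n. \<Sum>l<n. psib1 $$ (a,i) * (A1 ^\<^sub>m k) $$ (i,l) * psi1 $$ (l,c))"
        by (rule trip_entry[OF psib1 _ psi1 ab(1) c]) (use A1 in simp)
      also have "\<dots> = (\<Sum>i<n. \<Sum>l<n. psib $$ (a,i) * (A1 ^\<^sub>m k) $$ (i,l) * psi $$ (l,c))"
        using psi1e psib1e ab c by simp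
      finally have e: "(psib1 * A1 ^\<^sub>m k * psi1) $$ (a,c) = (\<Sum>i<n. \<Sum>l<n. psib $$ (a,i) * (A1 ^\<^sub>m k) $$ (i,l) * psi $$ (l,c))" .
      show "(\<Sum>i<n. \<Sum>l<n. f i k l c) = (psib1 * A1 ^\<^sub>m k * psi1) $$ (a,c) * (psib $$ (c,n) * ?a^(p - 1 - k) * psi $$ (n,b))"
        unfolding f_def e by (simp add: sum_distrib_left sum_distrib_right mult_ac)
    qed
    finally show ?thesis .
  qed
  finally show ?thesis by simp
qed


definition ulm :: "nat \<Rightarrow> nat \<Rightarrow> complex mat \<Rightarrow> complex mat" where
  "ulm r c M = mat r c (\<lambda>(i,j). M $$ (i,j))"
definition lastB :: "nat \<Rightarrow> complex mat \<Rightarrow> complex mat" where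
  "lastB n B = mat 1 1 (\<lambda>_. B $$ (n,n))"
definition lastPsi :: "nat \<Rightarrow> nat \<Rightarrow> complex mat \<Rightarrow> complex mat" where
  "lastPsi n K psi = mat 1 K (\<lambda>(_,j). psi $$ (n,j))"
definition lastPsib :: "nat \<Rightarrow> nat \<Rightarrow> complex mat \<Rightarrow> complex mat" where
  "lastPsib n K psib = mat K 1 (\<lambda>(i,_). psib $$ (i,n))"

lemma ulm_carrier[simp]: "ulm r c M \<in> carrier_mat r c" unfolding ulm_def by simp
lemma ulm_dims[simp]: "dim_row (ulm r c M) = r" "dim_col (ulm r c M) = c" unfolding ulm_def by simp_all
lemma last_dims[simp]: "dim_row (lastB n B) = 1" "dim_col (lastB n B) = 1"
  "dim_row (lastPsi n K psi) = 1" "dim_col (lastPsi n K psi) = K"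
  "dim_row (lastPsib n K psib) = K" "dim_col (lastPsib n K psib) = 1"
  unfolding lastB_def lastPsi_def lastPsib_def by simp_all

lemma delta_sum_l: fixes K :: nat shows "a < K \<Longrightarrow> (\<Sum>c<K. (if a = c then 1 else 0) * g c) = (g a :: complex)"
proof -
  assume a: "a < K"
  have "(\<Sum>c<K. (if a = c then 1 else 0) * g c) = (\<Sum>c<K. if a = c then g c else 0)"
    by (rule sum.cong) auto
  also have "\<dots> = g a" using a by (subst sum.delta') auto
  finally show ?thesis .
qed

lemma delta_sum_r: fixes K :: nat shows "b < K \<Longrightarrow> (\<Sum>c<K. g c * (if c = b then 1 else 0)) = (g b :: complex)"
proof -
  assume b: "b < K"
  have "(\<Sum>c<K. g c * (if c = b then 1 else 0)) = (\<Sum>c<K. if c = b then g c else 0)"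
    by (rule sum.cong) auto
  also have "\<dots> = g b" using b by (subst sum.delta) auto
  finally show ?thesis .
qed
lemma ulm_index[simp]: "i < r \<Longrightarrow> j < c \<Longrightarrow> ulm r c M $$ (i,j) = M $$ (i,j)" unfolding ulm_def by simp
lemma lastB_carrier[simp]: "lastB n B \<in> carrier_mat 1 1" unfolding lastB_def by simp
lemma lastPsi_carrier[simp]: "lastPsi n K psi \<in> carrier_mat 1 K" unfolding lastPsi_def by simp
lemma lastPsib_carrier[simp]: "lastPsib n K psib \<in> carrier_mat K 1" unfolding lastPsib_def by simp

lemma pow_single: fixes M :: "complex mat" assumes "M \<in> carrier_mat 1 1" shows "(M ^\<^sub>m q) $$ (0,0) = (M $$ (0,0))^q"
proof (induction q)
  case 0 then show ?case using assms by simp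
next
  case (Suc q)
  have "(M ^\<^sub>m Suc q) $$ (0,0) = (\<Sum>k<1. (M ^\<^sub>m q) $$ (0,k) * M $$ (k,0))"
    by (simp only: pow_mat.simps, rule mult_entry) (use assms in auto)
  then show ?case using Suc by (simp add: mult.commute)
qed

lemma char_poly_single: assumes "M \<in> carrier_mat 1 1" shows "char_poly M = [:- M $$ (0,0), 1:]"
proof -
  have "char_poly M = (char_poly_matrix M) $$ (0,0)"
    unfolding char_poly_def by (rule det_single) (use assms in simp)
  also have "\<dots> = [:- M $$ (0,0), 1:]" using assms unfolding char_poly_matrix_def by simp
  finally show ?thesis .
qed

lemma char_poly_block:
  fixes Bt :: "complex mat"
  assumes Bt: "Bt \<in> carrier_mat (Suc n) (Suc n)" and low: "\<forall>j<n. Bt $$ (n,j) = 0"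
  shows "char_poly Bt = char_poly (ulm n n Bt) * [:- Bt $$ (n,n), 1:]"
proof -
  let ?A1 = "ulm n n Bt"
  let ?A2 = "mat n 1 (\<lambda>(i,_). Bt $$ (i,n))"
  let ?A4 = "mat 1 1 (\<lambda>_. Bt $$ (n,n))"
  have eq: "Bt = four_block_mat ?A1 ?A2 (0\<^sub>m 1 n) ?A4"
    by (rule eq_matI) (use Bt low in \<open>auto simp: less_Suc_eq ulm_def\<close>)
  let ?cm = "\<lambda> A. [:0, 1:] \<cdot>\<^sub>m 1\<^sub>m (dim_row A) + map_mat (\<lambda>a. [:- a:]) A"
  let ?B2 = "map_mat (\<lambda>a. [:- a:]) ?A2"
  have "char_poly Bt = det (?cm (four_block_mat ?A1 ?A2 (0\<^sub>m 1 n) ?A4))"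
    unfolding char_poly_defs using eq by simp
  also have "?cm (four_block_mat ?A1 ?A2 (0\<^sub>m 1 n) ?A4) = four_block_mat (?cm ?A1) ?B2 (0\<^sub>m 1 n) (?cm ?A4)"
    by (rule eq_matI) (auto simp: one_poly_def ulm_def)
  also have "det \<dots> = det (?cm ?A1) * det (?cm ?A4)"
    by (rule det_four_block_mat_lower_left_zero[of _ n _ 1]) auto
  also have "\<dots> = char_poly ?A1 * char_poly ?A4" unfolding char_poly_defs by simp
  also have "char_poly ?A4 = [:- Bt $$ (n,n), 1:]" by (subst char_poly_single) auto
  finally show ?thesis .
qed

lemma reflect_coeff_deg: assumes "degree p = d"
  shows "(if m \<le> d then coeff p (d - m) else 0) = coeff (reflect_poly p) m"
  using assms by (simp add: coeff_reflect_poly not_less)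

lemma ser1_reflect: assumes "degree p = d" "coeff p d = 1"
  shows "ser1 (\<lambda>i. if i \<le> d then coeff p (d - i) else 0) m = coeff (reflect_poly p) m"
  using assms by (auto simp: ser1_def coeff_reflect_poly not_less)

lemma mulG_snd: "snd (mulG K p q) m = (\<Sum>i\<le>m. ser1 (snd p) i * ser1 (snd q) (m - i))"
  by (cases p, cases q) (simp add: mulG_def)

lemma mulG_fst: "fst (mulG K p q) m a b = (\<Sum>i\<le>m. \<Sum>c<K. serK (fst p) i a c * serK (fst q) (m - i) c b)"
  by (cases p, cases q) (simp add: mulG_def)

lemma iN_snd: "snd (iN N K B psi psib) = (\<lambda>i. if i \<le> N then coeff (char_poly (B + psi * psib)) (N - i) else 0)"
  unfolding iN_def Btil_def by simp

lemma FL: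
  fixes B psi psib :: "complex mat"
  assumes B: "B \<in> carrier_mat (Suc n) (Suc n)" and psi: "psi \<in> carrier_mat (Suc n) K"
    and psib: "psib \<in> carrier_mat K (Suc n)"
    and h1: "\<forall>j<n. (B + psi * psib) $$ (n,j) = 0"
    and h2: "\<forall>i<n. B $$ (i,n) = (psi * psib) $$ (i,n)"
  shows "validEq K (iN (Suc n) K B psi psib)
     (mulG K (iN n K (ulm n n B) (ulm n K psi) (ulm K n psib)) (iN 1 K (lastB n B) (lastPsi n K psi) (lastPsib n K psib)))"
proof -
  define Bt where "Bt = B + psi * psib"
  define B1 where "B1 = ulm n n B"
  define psi1 where "psi1 = ulm n K psi"
  define psib1 where "psib1 = ulm K n psib"
  define B2 where "B2 = lastB n B"
  define psi2 where "psi2 = lastPsi n K psi"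
  define psib2 where "psib2 = lastPsib n K psib"
  define Bt1 where "Bt1 = B1 + psi1 * psib1"
  define Bt2 where "Bt2 = B2 + psi2 * psib2"
  define A where "A = (1/2) \<cdot>\<^sub>m Bt"
  define A1 where "A1 = (1/2) \<cdot>\<^sub>m Bt1"
  define A2 where "A2 = (1/2) \<cdot>\<^sub>m Bt2"
  define \<alpha> where "\<alpha> = A $$ (n,n)"
  have PP: "(psi * psib) $$ (i,j) = (\<Sum>c<K. psi $$ (i,c) * psib $$ (c,j))" if "i < Suc n" "j < Suc n" for i j
    by (rule mult_entry[OF psi psib that])
  have Btc: "Bt \<in> carrier_mat (Suc n) (Suc n)" unfolding Bt_def using B psi psib by simp
  have Ac: "A \<in> carrier_mat (Suc n) (Suc n)" unfolding A_def using Btc by simp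
  have B1c: "B1 \<in> carrier_mat n n" and psi1c: "psi1 \<in> carrier_mat n K" and psib1c: "psib1 \<in> carrier_mat K n"
    unfolding B1_def psi1_def psib1_def by simp_all
  have B2c: "B2 \<in> carrier_mat 1 1" and psi2c: "psi2 \<in> carrier_mat 1 K" and psib2c: "psib2 \<in> carrier_mat K 1"
    unfolding B2_def psi2_def psib2_def by (rule lastB_carrier lastPsi_carrier lastPsib_carrier)+
  have Bt1c: "Bt1 \<in> carrier_mat n n" unfolding Bt1_def using B1c psi1c psib1c by simp
  have Bt2c: "Bt2 \<in> carrier_mat 1 1" unfolding Bt2_def using B2c psi2c psib2c by simp
  have A1c: "A1 \<in> carrier_mat n n" unfolding A1_def using Bt1c by simp
  have A2c: "A2 \<in> carrier_mat 1 1" unfolding A2_def using Bt2c by simp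
  have Bte: "Bt $$ (i,j) = B $$ (i,j) + (\<Sum>c<K. psi $$ (i,c) * psib $$ (c,j))" if "i < Suc n" "j < Suc n" for i j
    unfolding Bt_def using that B psi psib PP[OF that] by simp
  have Bt1e: "Bt1 $$ (i,j) = Bt $$ (i,j)" if "i < n" "j < n" for i j
  proof -
    have "(psi1 * psib1) $$ (i,j) = (\<Sum>c<K. psi1 $$ (i,c) * psib1 $$ (c,j))"
      by (rule mult_entry[OF psi1c psib1c that])
    then show ?thesis unfolding Bt1_def using that B1c psi1c psib1c Bte[of i j]
      by (simp add: B1_def psi1_def psib1_def)
  qed
  have A1A: "\<forall>i<n. \<forall>j<n. A1 $$ (i,j) = A $$ (i,j)"
    using Bt1e Bt1c Btc unfolding A1_def A_def by simp
  have low: "\<forall>j<n. A $$ (n,j) = 0"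
  proof (intro allI impI)
    fix j assume j: "j < n"
    have "A $$ (n,j) = (1/2) * Bt $$ (n,j)" unfolding A_def using Btc j by simp
    then show "A $$ (n,j) = 0" using h1 j unfolding Bt_def by simp
  qed
  have col: "\<forall>l<n. A $$ (l,n) = (\<Sum>c<K. psi $$ (l,c) * psib $$ (c,n))"
  proof (intro allI impI)
    fix l assume l: "l < n"
    have "A $$ (l,n) = (1/2) * Bt $$ (l,n)" unfolding A_def using Btc l by simp
    also have "\<dots> = (\<Sum>c<K. psi $$ (l,c) * psib $$ (c,n))"
      using Bte[of l n] h2 PP[of l n] l by simp
    finally show "A $$ (l,n) = (\<Sum>c<K. psi $$ (l,c) * psib $$ (c,n))" .
  qed
  have A2e: "A2 $$ (0,0) = \<alpha>"
  proof -
    have "(psi2 * psib2) $$ (0,0) = (\<Sum>c<K. psi2 $$ (0,c) * psib2 $$ (c,0))"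
      by (rule mult_entry[OF psi2c psib2c]) auto
    then have "Bt2 $$ (0,0) = Bt $$ (n,n)"
      unfolding Bt2_def using B2c psi2c psib2c Bte[of n n]
      by (simp add: B2_def psi2_def psib2_def lastB_def lastPsi_def lastPsib_def)
    then show ?thesis unfolding A2_def \<alpha>_def A_def using Bt2c Btc by simp
  qed
  have y: "(psib2 * A2 ^\<^sub>m q * psi2) $$ (c,b) = psib $$ (c,n) * \<alpha>^q * psi $$ (n,b)" if "c < K" "b < K" for q c b
  proof -
    have "(psib2 * A2 ^\<^sub>m q * psi2) $$ (c,b) = (\<Sum>i<1. \<Sum>j<1. psib2 $$ (c,i) * (A2 ^\<^sub>m q) $$ (i,j) * psi2 $$ (j,b))"
      by (rule trip_entry[OF psib2c _ psi2c that]) (use A2c in simp)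
    also have "\<dots> = psib $$ (c,n) * \<alpha>^q * psi $$ (n,b)"
      using pow_single[OF A2c, of q] A2e that by (simp add: psib2_def psi2_def lastPsi_def lastPsib_def)
    finally show ?thesis .
  qed
  note MB = markov_block[OF Ac A1c low A1A psi psib psi1c psib1c _ _ col]
  have psi1e: "\<forall>i<n. \<forall>c<K. psi1 $$ (i,c) = psi $$ (i,c)" unfolding psi1_def by simp
  have psib1e: "\<forall>c<K. \<forall>i<n. psib1 $$ (c,i) = psib $$ (c,i)" unfolding psib1_def by simp
  define x1 where "x1 = fst (iN n K B1 psi1 psib1)"
  define x2 where "x2 = fst (iN 1 K B2 psi2 psib2)"
  have x1e: "x1 i a c = (psib1 * A1 ^\<^sub>m (i - 1) * psi1) $$ (a,c)" if "1 \<le> i" "a < K" "c < K" for i a c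
    unfolding x1_def iN_def Btil_def A1_def Bt1_def using that by simp
  have x2e: "x2 i c b = psib $$ (c,n) * \<alpha>^(i - 1) * psi $$ (n,b)" if "1 \<le> i" "c < K" "b < K" for i c b
    using y[OF that(2,3), of "i - 1"] that unfolding x2_def iN_def Btil_def A2_def Bt2_def by simp
  have xpart: "fst (iN (Suc n) K B psi psib) m a b = fst (mulG K (iN n K B1 psi1 psib1) (iN 1 K B2 psi2 psib2)) m a b"
    if m: "1 \<le> m" and ab: "a < K" "b < K" for m a b
  proof -
    obtain p where p: "m = Suc p" using m by (cases m) auto
    have L: "fst (iN (Suc n) K B psi psib) m a b = (psib * A ^\<^sub>m p * psi) $$ (a,b)"
      unfolding iN_def Btil_def A_def Bt_def using m ab p by simp
    define f where "f = (\<lambda>i. \<Sum>c<K. serK x1 i a c * serK x2 (m - i) c b)"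
    have R: "fst (mulG K (iN n K B1 psi1 psib1) (iN 1 K B2 psi2 psib2)) m a b = (\<Sum>i\<le>m. f i)"
      unfolding mulG_def f_def x1_def x2_def by (simp split: prod.splits)
    have "(\<Sum>i\<le>m. f i) = f 0 + (\<Sum>k<p. f (Suc k)) + f (Suc p)"
      unfolding p sum.atMost_Suc_shift by (simp add: lessThan_Suc_atMost[symmetric])
    also have "f 0 = psib $$ (a,n) * \<alpha>^p * psi $$ (n,b)"
    proof -
      have "f 0 = (\<Sum>c<K. (if a = c then 1 else 0) * x2 m c b)" unfolding f_def serK_def using p by simp
      also have "\<dots> = x2 m a b" by (rule delta_sum_l[OF ab(1)])
      finally show ?thesis using x2e[of m a b] ab p by simp
    qed
    also have "f (Suc p) = (psib1 * A1 ^\<^sub>m p * psi1) $$ (a,b)"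
    proof -
      have "f (Suc p) = (\<Sum>c<K. x1 m a c * (if c = b then 1 else 0))" unfolding f_def serK_def using p by simp
      also have "\<dots> = x1 m a b" by (rule delta_sum_r[OF ab(2)])
      finally show ?thesis using x1e[of m a b] ab p by simp
    qed
    also have "(\<Sum>k<p. f (Suc k)) = (\<Sum>k<p. \<Sum>c<K. (psib1 * A1 ^\<^sub>m k * psi1) $$ (a,c) * (psib $$ (c,n) * \<alpha>^(p - 1 - k) * psi $$ (n,b)))"
    proof (rule sum.cong[OF refl])
      fix k assume "k \<in> {..<p}"
      then have k: "k < p" by simp
      show "f (Suc k) = (\<Sum>c<K. (psib1 * A1 ^\<^sub>m k * psi1) $$ (a,c) * (psib $$ (c,n) * \<alpha>^(p - 1 - k) * psi $$ (n,b)))"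
        unfolding f_def
      proof (rule sum.cong[OF refl])
        fix c assume "c \<in> {..<K}"
        then have c: "c < K" by simp
        have "m - Suc k = Suc (p - 1 - k)" using k p by simp
        then show "serK x1 (Suc k) a c * serK x2 (m - Suc k) c b
            = (psib1 * A1 ^\<^sub>m k * psi1) $$ (a,c) * (psib $$ (c,n) * \<alpha>^(p - 1 - k) * psi $$ (n,b))"
          unfolding serK_def using x1e[of "Suc k" a c] x2e[of "Suc (p - 1 - k)" c b] ab c by simp
      qed
    qed
    finally have "(\<Sum>i\<le>m. f i) = psib $$ (a,n) * \<alpha>^p * psi $$ (n,b)
       + (\<Sum>k<p. \<Sum>c<K. (psib1 * A1 ^\<^sub>m k * psi1) $$ (a,c) * (psib $$ (c,n) * \<alpha>^(p - 1 - k) * psi $$ (n,b)))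
       + (psib1 * A1 ^\<^sub>m p * psi1) $$ (a,b)" .
    then show ?thesis unfolding L R using MB[OF psi1e psib1e ab, of p] unfolding \<alpha>_def by simp
  qed
  have cpB: "char_poly Bt = char_poly Bt1 * char_poly Bt2"
  proof -
    have "ulm n n Bt = Bt1" by (rule eq_matI) (use Bt1e Bt1c in auto)
    moreover have "char_poly Bt2 = [:- Bt $$ (n,n), 1:]"
    proof -
      have "Bt2 $$ (0,0) = Bt $$ (n,n)" using A2e Btc Bt2c unfolding A2_def \<alpha>_def A_def by simp
      then show ?thesis using char_poly_single[OF Bt2c] by simp
    qed
    moreover have "\<forall>j<n. Bt $$ (n,j) = 0" using h1 unfolding Bt_def .
    ultimately show ?thesis using char_poly_block[OF Btc] by simp
  qed
  have dg: "degree (char_poly Bt) = Suc n" "degree (char_poly Bt1) = n" "degree (char_poly Bt2) = 1"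
    "coeff (char_poly Bt1) n = 1" "coeff (char_poly Bt2) 1 = 1"
    using degree_monic_char_poly[OF Btc] degree_monic_char_poly[OF Bt1c] degree_monic_char_poly[OF Bt2c] by auto
  have hpart: "snd (iN (Suc n) K B psi psib) m = snd (mulG K (iN n K B1 psi1 psib1) (iN 1 K B2 psi2 psib2)) m"
    if m: "1 \<le> m" for m
  proof -
    have L: "snd (iN (Suc n) K B psi psib) m = coeff (reflect_poly (char_poly Bt)) m"
      unfolding iN_snd Bt_def[symmetric] by (rule reflect_coeff_deg[OF dg(1)])
    have R: "snd (mulG K (iN n K B1 psi1 psib1) (iN 1 K B2 psi2 psib2)) m
        = (\<Sum>i\<le>m. coeff (reflect_poly (char_poly Bt1)) i * coeff (reflect_poly (char_poly Bt2)) (m - i))"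
      unfolding mulG_snd iN_snd Bt1_def[symmetric] Bt2_def[symmetric] ser1_reflect[OF dg(2) dg(4)] ser1_reflect[OF dg(3) dg(5)] ..
    show ?thesis unfolding L R cpB reflect_poly_mult coeff_mult ..
  qed
  show ?thesis unfolding validEq_def
    using xpart hpart unfolding B1_def psi1_def psib1_def B2_def psi2_def psib2_def by blast
qed


lemma construct:
  fixes B1 psi1 psib1 b2 psi2 psib2 :: "complex mat"
  assumes B1: "B1 \<in> carrier_mat n n" and psi1: "psi1 \<in> carrier_mat n K" and psib1: "psib1 \<in> carrier_mat K n"
    and b2: "b2 \<in> carrier_mat 1 1" and psi2: "psi2 \<in> carrier_mat 1 K" and psib2: "psib2 \<in> carrier_mat K 1"
  shows "\<exists>B psi psib. B \<in> carrier_mat (Suc n) (Suc n) \<and> psi \<in> carrier_mat (Suc n) K \<and> psib \<in> carrier_mat K (Suc n)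
     \<and> validEq K (iN (Suc n) K B psi psib) (mulG K (iN n K B1 psi1 psib1) (iN 1 K b2 psi2 psib2))"
proof -
  define psi where "psi = mat (Suc n) K (\<lambda>(i,j). if i < n then psi1 $$ (i,j) else psi2 $$ (0,j))"
  define psib where "psib = mat K (Suc n) (\<lambda>(i,j). if j < n then psib1 $$ (i,j) else psib2 $$ (i,0))"
  define B where "B = mat (Suc n) (Suc n) (\<lambda>(i,j). if i < n \<and> j < n then B1 $$ (i,j)
      else if i < n then (\<Sum>c<K. psi1 $$ (i,c) * psib2 $$ (c,0))
      else if j < n then - (\<Sum>c<K. psi2 $$ (0,c) * psib1 $$ (c,j))
      else b2 $$ (0,0))"
  have Bc: "B \<in> carrier_mat (Suc n) (Suc n)" and psic: "psi \<in> carrier_mat (Suc n) K"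
    and psibc: "psib \<in> carrier_mat K (Suc n)" unfolding B_def psi_def psib_def by auto
  have PP: "(psi * psib) $$ (i,j) = (\<Sum>c<K. psi $$ (i,c) * psib $$ (c,j))" if "i < Suc n" "j < Suc n" for i j
    by (rule mult_entry[OF psic psibc that])
  have h1: "\<forall>j<n. (B + psi * psib) $$ (n,j) = 0"
  proof (intro allI impI)
    fix j assume j: "j < n"
    have "(B + psi * psib) $$ (n,j) = B $$ (n,j) + (\<Sum>c<K. psi $$ (n,c) * psib $$ (c,j))"
      using Bc psic psibc j PP[of n j] by simp
    also have "\<dots> = 0" unfolding B_def psi_def psib_def using j by simp
    finally show "(B + psi * psib) $$ (n,j) = 0" .
  qed
  have h2: "\<forall>i<n. B $$ (i,n) = (psi * psib) $$ (i,n)"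
  proof (intro allI impI)
    fix i assume i: "i < n"
    have "(psi * psib) $$ (i,n) = (\<Sum>c<K. psi $$ (i,c) * psib $$ (c,n))" using PP[of i n] i by simp
    also have "\<dots> = (\<Sum>c<K. psi1 $$ (i,c) * psib2 $$ (c,0))" using i by (simp add: psi_def psib_def)
    also have "\<dots> = B $$ (i,n)" using i by (simp add: B_def)
    finally show "B $$ (i,n) = (psi * psib) $$ (i,n)" by simp
  qed
  have e1: "ulm n n B = B1" by (rule eq_matI) (use B1 in \<open>auto simp: B_def\<close>)
  have e2: "ulm n K psi = psi1" by (rule eq_matI) (use psi1 in \<open>auto simp: psi_def\<close>)
  have e3: "ulm K n psib = psib1" by (rule eq_matI) (use psib1 in \<open>auto simp: psib_def\<close>)
  have e4: "lastB n B = b2" by (rule eq_matI) (use b2 in \<open>auto simp: B_def lastB_def\<close>)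
  have e5: "lastPsi n K psi = psi2" by (rule eq_matI) (use psi2 in \<open>auto simp: psi_def lastPsi_def\<close>)
  have e6: "lastPsib n K psib = psib2" by (rule eq_matI) (use psib2 in \<open>auto simp: psib_def lastPsib_def\<close>)
  show ?thesis
    using FL[OF Bc psic psibc h1 h2] Bc psic psibc unfolding e1 e2 e3 e4 e5 e6 by blast
qed

lemma mulG_validEq: assumes "validEq K p p'" "validEq K q q'"
  shows "validEq K (mulG K p q) (mulG K p' q')"
proof -
  have f1: "serK (fst p) i a c = serK (fst p') i a c" if "a < K" "c < K" for i a c
    using assms(1) that unfolding validEq_def serK_def by auto
  have f2: "serK (fst q) i a c = serK (fst q') i a c" if "a < K" "c < K" for i a c
    using assms(2) that unfolding validEq_def serK_def by auto
  have s1: "ser1 (snd p) i = ser1 (snd p') i" for i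
    using assms(1) unfolding validEq_def ser1_def by auto
  have s2: "ser1 (snd q) i = ser1 (snd q') i" for i
    using assms(2) unfolding validEq_def ser1_def by auto
  show ?thesis unfolding validEq_def mulG_fst mulG_snd using f1 f2 s1 s2 by simp
qed

lemma iN0_unit: assumes "B \<in> carrier_mat 0 0" "psi \<in> carrier_mat 0 K" "psib \<in> carrier_mat K 0"
  shows "validEq K (iN 0 K B psi psib) unitG"
proof -
  have "(psib * ((1/2) \<cdot>\<^sub>m Btil B psi psib) ^\<^sub>m (i - 1) * psi) $$ (a, b) = 0" if "a < K" "b < K" for i a b
    by (subst trip_entry[OF assms(3) _ assms(2) that]) (use assms in \<open>auto simp: Btil_def\<close>)
  then show ?thesis unfolding validEq_def iN_def unitG_def by simp
qed

lemma multN_cong: "(\<And>i. i < n \<Longrightarrow> P i = P' i) \<Longrightarrow> multN K n P = multN K n P'"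
  by (induction n) auto

lemma multN_Y:
  assumes "P \<in> YN K N"
  shows "\<exists>B psi psib. B \<in> carrier_mat N N \<and> psi \<in> carrier_mat N K \<and> psib \<in> carrier_mat K N
     \<and> validEq K (multN K N P) (iN N K B psi psib)"
  using assms
proof (induction N)
  case 0
  show ?case
    by (intro exI[of _ "0\<^sub>m 0 0"] exI[of _ "0\<^sub>m 0 K"] exI[of _ "0\<^sub>m K 0"] conjI zero_carrier_mat)
       (simp add: validEq_sym[OF iN0_unit[of "0\<^sub>m 0 0" "0\<^sub>m 0 K" K "0\<^sub>m K 0"]])
next
  case (Suc N)
  then have "P \<in> YN K N" unfolding YN_def by simp
  then obtain B1 psi1 psib1 where c1: "B1 \<in> carrier_mat N N" "psi1 \<in> carrier_mat N K" "psib1 \<in> carrier_mat K N"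
    and v1: "validEq K (multN K N P) (iN N K B1 psi1 psib1)" using Suc.IH by blast
  have "P N \<in> Yset K" using Suc.prems unfolding YN_def by simp
  then obtain b2 psi2 psib2 where c2: "b2 \<in> carrier_mat 1 1" "psi2 \<in> carrier_mat 1 K" "psib2 \<in> carrier_mat K 1"
    and v2: "validEq K (P N) (iN 1 K b2 psi2 psib2)" unfolding Yset_def by blast
  obtain B psi psib where c: "B \<in> carrier_mat (Suc N) (Suc N)" "psi \<in> carrier_mat (Suc N) K" "psib \<in> carrier_mat K (Suc N)"
    and v: "validEq K (iN (Suc N) K B psi psib) (mulG K (iN N K B1 psi1 psib1) (iN 1 K b2 psi2 psib2))"
    using construct[OF c1 c2] by blast
  have "validEq K (multN K (Suc N) P) (mulG K (iN N K B1 psi1 psib1) (iN 1 K b2 psi2 psib2))"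
    using mulG_validEq[OF v1 v2] by simp
  then have "validEq K (multN K (Suc N) P) (iN (Suc N) K B psi psib)"
    using validEq_trans validEq_sym[OF v] by blast
  then show ?case using c by blast
qed

lemma coordsR_cases: assumes "c \<in> coordsR K"
  obtains i a b where "1 \<le> i" "a < K" "b < K" "c = (\<lambda>(x,h). x i a b)"
  | i where "1 \<le> i" "c = (\<lambda>(x,h). h i)"
proof -
  from assms have "c \<in> {(\<lambda>(x,h). x i a b) | i a b. 1 \<le> i \<and> a < K \<and> b < K} \<union> {(\<lambda>(x,h). h i) | i. 1 \<le> i}"
    unfolding coordsR_def .
  then show thesis
  proof (rule UnE)
    assume "c \<in> {(\<lambda>(x,h). x i a b) | i a b. 1 \<le> i \<and> a < K \<and> b < K}"
    then obtain i a b where "1 \<le> i" "a < K" "b < K" "c = (\<lambda>(x,h). x i a b)" by auto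
    then show thesis using that(1) by simp
  next
    assume "c \<in> {(\<lambda>(x,h). h i) | i. 1 \<le> i}"
    then obtain i where "1 \<le> i" "c = (\<lambda>(x,h). h i)" by auto
    then show thesis using that(2) by simp
  qed
qed

lemma ringR_compI:
  assumes f: "f \<in> ringR K"
    and x: "\<And>i a b. 1 \<le> i \<Longrightarrow> a < K \<Longrightarrow> b < K \<Longrightarrow> (\<lambda>y. fst (\<Phi> y) i a b) \<in> polyfun C"
    and h: "\<And>i. 1 \<le> i \<Longrightarrow> (\<lambda>y. snd (\<Phi> y) i) \<in> polyfun C"
  shows "(\<lambda>y. f (\<Phi> y)) \<in> polyfun C"
proof (rule polyfun_comp[OF f[unfolded ringR_def]])
  fix c assume "c \<in> coordsR K"
  then show "(\<lambda>y. c (\<Phi> y)) \<in> polyfun C"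
  proof (cases rule: coordsR_cases)
    case (1 i a b)
    then show ?thesis using x[of i a b] by (simp add: case_prod_beta)
  next
    case (2 i)
    then show ?thesis using h[of i] by (simp add: case_prod_beta)
  qed
qed

lemma serK_poly:
  assumes "\<And>i a b. 1 \<le> i \<Longrightarrow> a < K \<Longrightarrow> b < K \<Longrightarrow> (\<lambda>y. X y i a b) \<in> polyfun C" "a < K" "b < K"
  shows "(\<lambda>y. serK (X y) i a b) \<in> polyfun C"
proof (cases "i = 0")
  case True then show ?thesis unfolding serK_def by (simp add: polyfun.pf_const)
next
  case False then show ?thesis unfolding serK_def using assms by simp
qed

lemma ser1_poly:
  assumes "\<And>i. 1 \<le> i \<Longrightarrow> (\<lambda>y. X y i) \<in> polyfun C"
  shows "(\<lambda>y. ser1 (X y) i) \<in> polyfun C"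
proof (cases "i = 0")
  case True then show ?thesis unfolding ser1_def by (simp add: polyfun.pf_const)
next
  case False then show ?thesis unfolding ser1_def using assms by simp
qed

lemma mulG_poly_x:
  fixes i a b :: nat
  assumes px: "\<And>i a b. 1 \<le> i \<Longrightarrow> a < K \<Longrightarrow> b < K \<Longrightarrow> (\<lambda>y. fst (p y) i a b) \<in> polyfun C"
    and qx: "\<And>i a b. 1 \<le> i \<Longrightarrow> a < K \<Longrightarrow> b < K \<Longrightarrow> (\<lambda>y. fst (q y) i a b) \<in> polyfun C"
    and ab: "a < K" "b < K"
  shows "(\<lambda>y. fst (mulG K (p y) (q y)) i a b) \<in> polyfun C"
  unfolding mulG_fst
proof (rule polyfun_sum[OF finite_atMost], rule polyfun_sum[OF finite_lessThan], rule polyfun.pf_mult)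
  fix l c assume "c \<in> {..<K}"
  then have c: "c < K" by simp
  show "(\<lambda>y. serK (fst (p y)) l a c) \<in> polyfun C" by (rule serK_poly[OF px ab(1) c])
  show "(\<lambda>y. serK (fst (q y)) (i - l) c b) \<in> polyfun C" by (rule serK_poly[OF qx c ab(2)])
qed

lemma mulG_poly_h:
  fixes i :: nat
  assumes ph: "\<And>i. 1 \<le> i \<Longrightarrow> (\<lambda>y. snd (p y) i) \<in> polyfun C"
    and qh: "\<And>i. 1 \<le> i \<Longrightarrow> (\<lambda>y. snd (q y) i) \<in> polyfun C"
  shows "(\<lambda>y. snd (mulG K (p y) (q y)) i) \<in> polyfun C"
  unfolding mulG_snd
proof (rule polyfun_sum[OF finite_atMost], rule polyfun.pf_mult)
  fix l
  show "(\<lambda>y. ser1 (snd (p y)) l) \<in> polyfun C" by (rule ser1_poly[OF ph])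
  show "(\<lambda>y. ser1 (snd (q y)) (i - l)) \<in> polyfun C" by (rule ser1_poly[OF qh])
qed

lemma slot_coords_x:
  fixes i a b :: nat
  assumes "j < N" "1 \<le> i" "a < K" "b < K"
  shows "(\<lambda>P. fst (P j) i a b) \<in> polyfun (coordsN K N)"
proof -
  have "(\<lambda>(x,h). x i a b) \<in> coordsR K" unfolding coordsR_def using assms by blast
  then have "(\<lambda>P. (\<lambda>(x,h). x i a b) (P j)) \<in> coordsN K N" unfolding coordsN_def using assms by blast
  then show ?thesis by (simp add: case_prod_beta polyfun.pf_coord)
qed

lemma slot_coords_h:
  fixes i :: nat
  assumes "j < N" "1 \<le> i"
  shows "(\<lambda>P. snd (P j) i) \<in> polyfun (coordsN K N)"
proof -
  have "(\<lambda>(x,h). h i) \<in> coordsR K" unfolding coordsR_def using assms by blast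
  then have "(\<lambda>P. (\<lambda>(x,h). h i) (P j)) \<in> coordsN K N" unfolding coordsN_def using assms by blast
  then show ?thesis by (simp add: case_prod_beta polyfun.pf_coord)
qed

lemma multN_poly:
  assumes "n \<le> N"
  shows "(\<forall>i a b. 1 \<le> i \<longrightarrow> a < K \<longrightarrow> b < K \<longrightarrow> (\<lambda>P. fst (multN K n P) i a b) \<in> polyfun (coordsN K N))
       \<and> (\<forall>i. 1 \<le> i \<longrightarrow> (\<lambda>P. snd (multN K n P) i) \<in> polyfun (coordsN K N))"
  using assms
proof (induction n)
  case 0
  show ?case by (simp add: unitG_def polyfun.pf_const)
next
  case (Suc n)
  then have IH: "(\<forall>i a b. 1 \<le> i \<longrightarrow> a < K \<longrightarrow> b < K \<longrightarrow> (\<lambda>P. fst (multN K n P) i a b) \<in> polyfun (coordsN K N))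
       \<and> (\<forall>i. 1 \<le> i \<longrightarrow> (\<lambda>P. snd (multN K n P) i) \<in> polyfun (coordsN K N))" by simp
  have nN: "n < N" using Suc by simp
  have X: "(\<lambda>P. fst (multN K (Suc n) P) i a b) \<in> polyfun (coordsN K N)" if "1 \<le> i" "a < K" "b < K" for i a b
    using mulG_poly_x[of K "\<lambda>P. multN K n P" "coordsN K N" "\<lambda>P. P n", OF _ slot_coords_x[OF nN] that(2,3)] IH by simp
  have H: "(\<lambda>P. snd (multN K (Suc n) P) i) \<in> polyfun (coordsN K N)" if "1 \<le> i" for i
    using mulG_poly_h[of "\<lambda>P. multN K n P" "coordsN K N" "\<lambda>P. P n", OF _ slot_coords_h[OF nN]] IH by simp
  show ?case using X H by blast
qed

lemma DeltaN_ringRN: assumes "f \<in> ringR K" shows "DeltaN K N f \<in> ringRN K N"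
  unfolding DeltaN_def ringRN_def
  by (rule ringR_compI[OF assms]) (use multN_poly[of N N K] in auto)

lemma mulG_fixed_poly: assumes "f \<in> ringR K" shows "(\<lambda>p. f (mulG K p q)) \<in> ringR K"
proof -
  have px: "(\<lambda>p. fst p i a b) \<in> polyfun (coordsR K)" if "1 \<le> i" "a < K" "b < K" for i a b
  proof -
    have "(\<lambda>(x,h). x i a b) \<in> coordsR K" using that unfolding coordsR_def by blast
    moreover have "(\<lambda>p::point. fst p i a b) = (\<lambda>(x,h). x i a b)" by auto
    ultimately show ?thesis by (simp add: polyfun.pf_coord)
  qed
  have ph: "(\<lambda>p. snd p i) \<in> polyfun (coordsR K)" if "1 \<le> i" for i
  proof -
    have "(\<lambda>(x,h). h i) \<in> coordsR K" using that unfolding coordsR_def by blast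
    moreover have "(\<lambda>p::point. snd p i) = (\<lambda>(x,h). h i)" by auto
    ultimately show ?thesis by (simp add: polyfun.pf_coord)
  qed
  have qx: "(\<lambda>p::point. fst q i a b) \<in> polyfun (coordsR K)" for i a b by (rule polyfun.pf_const)
  have qh: "(\<lambda>p::point. snd q i) \<in> polyfun (coordsR K)" for i by (rule polyfun.pf_const)
  show ?thesis unfolding ringR_def
  proof (rule ringR_compI[OF assms])
    fix i a b :: nat assume "1 \<le> i" "a < K" "b < K"
    then show "(\<lambda>y. fst (mulG K y q) i a b) \<in> polyfun (coordsR K)"
      using mulG_poly_x[of K "\<lambda>p. p" "coordsR K" "\<lambda>_. q", OF px qx] by simp
  next
    fix i :: nat assume "1 \<le> i"
    then show "(\<lambda>y. snd (mulG K y q) i) \<in> polyfun (coordsR K)"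
      using mulG_poly_h[where p="\<lambda>p. p" and C="coordsR K" and q="\<lambda>_. q" and i=i and K=K, OF ph qh] by simp
  qed
qed

lemma sumJ1_vanish: assumes "F \<in> sumJ1 K N" "P \<in> YN K N" shows "F P = 0"
  using assms(1) unfolding sumJ1_def
proof (induction rule: ideal_gen.induct)
  case (ig_mult r s)
  then obtain g j where "s = (\<lambda>P. g (P j))" "g \<in> idealJ 1 K" "j < N" by blast
  then show ?case using assms(2) idealJ1_iff unfolding YN_def by auto
qed simp_all

lemma subset_dir: assumes "f \<in> idealJ N K" shows "DeltaN K N f \<in> sumJ1 K N"
proof -
  have fR: "f \<in> ringR K" using assms unfolding idealJ_def by simp
  have "\<forall>P\<in>YN K N. DeltaN K N f P = 0"
  proof
    fix P assume "P \<in> YN K N"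
    then obtain B psi psib where c: "B \<in> carrier_mat N N" "psi \<in> carrier_mat N K" "psib \<in> carrier_mat K N"
      and v: "validEq K (multN K N P) (iN N K B psi psib)" using multN_Y by blast
    have "DeltaN K N f P = f (iN N K B psi psib)" unfolding DeltaN_def by (rule ringR_validEq[OF fR v])
    also have "\<dots> = 0" using assms c unfolding idealJ_def by simp
    finally show "DeltaN K N f P = 0" .
  qed
  moreover have "DeltaN K N f \<in> ringFrom K N 0" using DeltaN_ringRN[OF fR] ringFrom_0 by simp
  ultimately show ?thesis using tensor by blast
qed


lemma conj_markov:
  fixes psib S T Y psi :: "complex mat"
  assumes psib: "psib \<in> carrier_mat K m" and S: "S \<in> carrier_mat m m" and T: "T \<in> carrier_mat m m"
    and Y: "Y \<in> carrier_mat m m" and psi: "psi \<in> carrier_mat m K" and ST: "S * T = 1\<^sub>m m"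
  shows "(psib * S) * (T * Y * S) * (T * psi) = psib * Y * psi"
proof -
  note [simp] = assoc_mult_mat[of _ K m _ m _ m] assoc_mult_mat[of _ K m _ m _ K]
    assoc_mult_mat[of _ m m _ m _ m] assoc_mult_mat[of _ m m _ m _ K]
  have e1: "S * (T * X) = X" if "X \<in> carrier_mat m m" for X
  proof -
    have "S * (T * X) = (S * T) * X" using S T that by simp
    then show ?thesis using ST that by simp
  qed
  have e2: "S * (T * X) = X" if "X \<in> carrier_mat m K" for X
  proof -
    have "S * (T * X) = (S * T) * X" using S T that by simp
    then show ?thesis using ST that by simp
  qed
  have "(psib * S) * (T * Y * S) * (T * psi) = psib * (S * (T * (Y * (S * (T * psi)))))"
    using psib S T Y psi by simp
  also have "\<dots> = psib * (Y * psi)" using psib S T Y psi by (simp add: e1 e2)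
  also have "\<dots> = psib * Y * psi" using psib Y psi by simp
  finally show ?thesis .
qed

lemma iN_conj:
  fixes B psi psib S T :: "complex mat"
  assumes B: "B \<in> carrier_mat m m" and psi: "psi \<in> carrier_mat m K" and psib: "psib \<in> carrier_mat K m"
    and S: "S \<in> carrier_mat m m" and T: "T \<in> carrier_mat m m"
    and ST: "S * T = 1\<^sub>m m" and TS: "T * S = 1\<^sub>m m"
  shows "iN m K (T * B * S) (T * psi) (psib * S) = iN m K B psi psib"
proof -
  define Bt where "Bt = Btil B psi psib"
  have Btc: "Bt \<in> carrier_mat m m" unfolding Bt_def Btil_def using B psi psib by simp
  have bt: "Btil (T * B * S) (T * psi) (psib * S) = T * Bt * S"
  proof -
    have "T * psi * (psib * S) = T * (psi * psib) * S"
      using T psi psib S assoc_mult_mat[of T m m psi K "psib * S" m] assoc_mult_mat[of psi m K psib m S m]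
        assoc_mult_mat[of T m m "psi * psib" m S m] by simp
    moreover have "T * Bt * S = T * B * S + T * (psi * psib) * S"
      unfolding Bt_def Btil_def using T B psi psib S
      by (simp add: mult_add_distrib_mat[of T m m] add_mult_distrib_mat[of "T*B" m m "T*(psi*psib)" S m])
    ultimately show ?thesis unfolding Btil_def by simp
  qed
  have wit: "similar_mat_wit (T * Bt * S) Bt T S"
    by (rule similar_mat_witI[OF TS ST refl]) (use Btc T S in auto)
  have pw: "((1/2) \<cdot>\<^sub>m (T * Bt * S)) ^\<^sub>m k = T * ((1/2) \<cdot>\<^sub>m Bt) ^\<^sub>m k * S" for k
    using similar_mat_witD(3)[OF refl similar_mat_wit_pow[OF similar_mat_wit_smult[OF wit]]] by simp
  have mk: "(psib * S) * (((1/2) \<cdot>\<^sub>m (T * Bt * S)) ^\<^sub>m k) * (T * psi) = psib * ((1/2) \<cdot>\<^sub>m Bt) ^\<^sub>m k * psi" for k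
    unfolding pw by (rule conj_markov[OF psib S T _ psi ST]) (use Btc in simp)
  have cp: "char_poly (T * Bt * S) = char_poly Bt"
    by (rule char_poly_similar) (use wit in \<open>auto simp: similar_mat_def\<close>)
  show ?thesis unfolding iN_def bt Bt_def[symmetric] mk cp ..
qed


lemma schur_step:
  fixes B psi psib :: "complex mat"
  assumes B: "B \<in> carrier_mat m m" and psi: "psi \<in> carrier_mat m K" and psib: "psib \<in> carrier_mat K m"
  shows "\<exists>S T. S \<in> carrier_mat m m \<and> T \<in> carrier_mat m m \<and> S * T = 1\<^sub>m m \<and> T * S = 1\<^sub>m m
     \<and> (\<forall>i j. i < j \<longrightarrow> j < m \<longrightarrow> (T * B * S) $$ (i,j) = ((T * psi) * (psib * S)) $$ (i,j))"
proof -
  define X where "X = B - psi * psib"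
  have Xc: "X \<in> carrier_mat m m" unfolding X_def using B psi psib by (simp add: minus_carrier_mat)
  have XTc: "transpose_mat X \<in> carrier_mat m m" using Xc by simp
  obtain as where asd: "char_poly (transpose_mat X) = (\<Prod>a\<leftarrow>as. [:- a, 1:])"
    using char_poly_factorized[OF XTc] by blast
  have "\<exists>U\<in>carrier_mat m m. upper_triangular U \<and> similar_mat (transpose_mat X) U"
    by (rule schur_decomposition_exists[OF XTc asd])
  then obtain U where Uc: "U \<in> carrier_mat m m"
    and ut: "upper_triangular U" and sim: "similar_mat (transpose_mat X) U" by (elim bexE conjE)
  from sim obtain P Q where wit: "similar_mat_wit (transpose_mat X) U P Q" unfolding similar_mat_def by (elim exE)
  note W = similar_mat_witD2[OF XTc wit]
  have PQ: "P * Q = 1\<^sub>m m" by (rule W(1))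
  have QP: "Q * P = 1\<^sub>m m" by (rule W(2))
  have XU: "transpose_mat X = P * U * Q" by (rule W(3))
  have Pc: "P \<in> carrier_mat m m" by (rule W(6))
  have Qc: "Q \<in> carrier_mat m m" by (rule W(7))
  have n': "m = m" ..
  define T where "T = transpose_mat P"
  define S where "S = transpose_mat Q"
  have Tc: "T \<in> carrier_mat m m" and Sc: "S \<in> carrier_mat m m" unfolding T_def S_def using Pc Qc by auto
  have ST: "S * T = 1\<^sub>m m" unfolding S_def T_def
    using transpose_mult[OF Pc Qc] PQ n' by simp
  have TS: "T * S = 1\<^sub>m m" unfolding S_def T_def
    using transpose_mult[OF Qc Pc] QP n' by simp
  note [simp] = assoc_mult_mat[of _ m m _ m _ m]
  have X: "X = S * transpose_mat U * T"
  proof -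
    have "X = transpose_mat (transpose_mat X)" by simp
    also have "\<dots> = transpose_mat (P * U * Q)" unfolding XU ..
    also have "\<dots> = S * transpose_mat U * T"
      unfolding S_def T_def using transpose_mult[OF mult_carrier_mat[OF Pc Uc] Qc] transpose_mult[OF Pc Uc] Pc Uc Qc
      by simp
    finally show ?thesis .
  qed
  have UT: "T * X * S = transpose_mat U"
  proof -
    have "T * X * S = (T * S) * transpose_mat U * (T * S)" unfolding X using Tc Sc Uc by simp
    then show ?thesis unfolding TS using Uc by simp
  qed
  have eq: "T * X * S = T * B * S - (T * psi) * (psib * S)"
  proof -
    have "T * X * S = (T * B - T * (psi * psib)) * S"
      unfolding X_def using Tc B psi psib by (simp add: mult_minus_distrib_mat[of T m m])
    also have "\<dots> = T * B * S - T * (psi * psib) * S"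
      using Tc B psi psib Sc by (simp add: minus_mult_distrib_mat[of "T * B" m m _ S m])
    also have "T * (psi * psib) * S = (T * psi) * (psib * S)"
      using Tc psi psib Sc assoc_mult_mat[of T m m psi K "psib * S" m] assoc_mult_mat[of psi m K psib m S m]
        assoc_mult_mat[of T m m "psi * psib" m S m] by simp
    finally show ?thesis .
  qed
  have "(T * B * S) $$ (i,j) = ((T * psi) * (psib * S)) $$ (i,j)" if "i < j" "j < m" for i j
  proof -
    have "(T * X * S) $$ (i,j) = U $$ (j,i)" unfolding UT using Uc that by simp
    also have "\<dots> = 0" using ut Uc that unfolding upper_triangular_def by auto
    finally have "(T * X * S) $$ (i,j) = 0" .
    then show ?thesis unfolding eq using that Tc B Sc psi psib by simp
  qed
  then show ?thesis using Sc Tc ST TS by blast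
qed


definition Zm :: "nat \<Rightarrow> complex \<Rightarrow> complex mat \<Rightarrow> complex mat" where
  "Zm m \<rho> X = mat m m (\<lambda>(i,j). (if i = j then \<rho> else 0) - X $$ (i,j))"

lemma Zm_carrier[simp]: "Zm m \<rho> X \<in> carrier_mat m m" unfolding Zm_def by simp
lemma Zm_dims[simp]: "dim_row (Zm m \<rho> X) = m" "dim_col (Zm m \<rho> X) = m" unfolding Zm_def by simp_all

lemma char_poly_det: assumes X: "X \<in> carrier_mat m m"
  shows "poly (char_poly X) \<rho> = det (Zm m \<rho> X)"
proof -
  have "- char_matrix X \<rho> = Zm m \<rho> X"
    by (rule eq_matI) (use X in \<open>auto simp: char_matrix_def Zm_def\<close>)
  then show ?thesis using char_poly_matrix[OF X, of \<rho>] by simp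
qed

lemma det_pert:
  fixes A A' :: "complex mat"
  assumes A: "A \<in> carrier_mat m m" and A': "A' \<in> carrier_mat m m" and k: "k < m"
    and diff: "\<And>i j. i < m \<Longrightarrow> j < m \<Longrightarrow> A' $$ (i,j) = A $$ (i,j) + (if i = k \<and> j = k then d else 0)"
  shows "det A' = det A + d * det (mat_delete A k k)"
proof -
  have md: "mat_delete A' i k = mat_delete A i k" if "i < m" for i
    by (rule eq_matI) (use A A' diff that in \<open>auto simp: mat_delete_def\<close>)
  have "det A' = (\<Sum>i<m. A' $$ (i,k) * cofactor A' i k)" by (rule laplace_expansion_column[OF A' k])
  also have "\<dots> = (\<Sum>i<m. A $$ (i,k) * cofactor A i k + (if i = k then d * cofactor A k k else 0))"
    by (rule sum.cong[OF refl]) (use diff k md in \<open>auto simp: cofactor_def distrib_right\<close>)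
  also have "\<dots> = (\<Sum>i<m. A $$ (i,k) * cofactor A i k) + d * cofactor A k k"
    using k by (simp add: sum.distrib)
  also have "(\<Sum>i<m. A $$ (i,k) * cofactor A i k) = det A" by (rule laplace_expansion_column[OF A k, symmetric])
  also have "cofactor A k k = det (mat_delete A k k)" unfolding cofactor_def by simp
  finally show ?thesis .
qed

lemma left_eig:
  fixes Y :: "complex mat"
  assumes Y: "Y \<in> carrier_mat m m" and d: "det (Zm m \<rho> Y) = 0"
  shows "\<exists>v. v \<in> carrier_vec m \<and> v \<noteq> 0\<^sub>v m \<and> (\<forall>j<m. (\<Sum>i<m. v $ i * Y $$ (i,j)) = \<rho> * v $ j)"
proof -
  have "det (transpose_mat (Zm m \<rho> Y)) = 0" using d det_transpose[of "Zm m \<rho> Y" m] by simp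
  then obtain v where v: "v \<in> carrier_vec m" "v \<noteq> 0\<^sub>v m" and z: "transpose_mat (Zm m \<rho> Y) *\<^sub>v v = 0\<^sub>v m"
    using det_0_iff_vec_prod_zero_field[of "transpose_mat (Zm m \<rho> Y)" m] by auto
  have "(\<Sum>i<m. v $ i * Y $$ (i,j)) = \<rho> * v $ j" if j: "j < m" for j
  proof -
    have "(transpose_mat (Zm m \<rho> Y) *\<^sub>v v) $ j = 0" using z j by simp
    then have "(\<Sum>i<m. ((if i = j then \<rho> else 0) - Y $$ (i,j)) * v $ i) = 0"
      using j v(1) by (simp add: scalar_prod_def Zm_def atLeast0LessThan)
    moreover have "(\<Sum>i<m. ((if i = j then \<rho> else 0) - Y $$ (i,j)) * v $ i)
        = (\<Sum>i<m. (if i = j then \<rho> * v $ i else 0) - v $ i * Y $$ (i,j))"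
      by (rule sum.cong) (auto simp: algebra_simps)
    moreover have "\<dots> = (\<Sum>i<m. (if i = j then \<rho> * v $ i else 0)) - (\<Sum>i<m. v $ i * Y $$ (i,j))"
      by (rule sum_subtractf)
    moreover have "(\<Sum>i<m. (if i = j then \<rho> * v $ i else 0)) = \<rho> * v $ j" using j by (subst sum.delta) auto
    ultimately show ?thesis by simp
  qed
  then show ?thesis using v by blast
qed


lemma row_id:
  fixes A X :: "complex mat"
  assumes A: "A \<in> carrier_mat m m" and X: "X \<in> carrier_mat m p" and i: "i < m" and k: "k < p"
    and r: "\<forall>l<m. A $$ (i,l) = (if i = l then 1 else 0)"
  shows "(A * X) $$ (i,k) = X $$ (i,k)"
proof -
  have "(A * X) $$ (i,k) = (\<Sum>l<m. A $$ (i,l) * X $$ (l,k))" by (rule mult_entry[OF A X i k])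
  also have "\<dots> = (\<Sum>l<m. if i = l then X $$ (l,k) else 0)" by (rule sum.cong) (use r in auto)
  also have "\<dots> = X $$ (i,k)" using i by (subst sum.delta') auto
  finally show ?thesis .
qed

lemma col_id:
  fixes A X :: "complex mat"
  assumes A: "A \<in> carrier_mat r m" and X: "X \<in> carrier_mat m m" and i: "i < r" and j: "j < m"
    and c: "\<forall>l<m. X $$ (l,j) = (if l = j then 1 else 0)"
  shows "(A * X) $$ (i,j) = A $$ (i,j)"
proof -
  have "(A * X) $$ (i,j) = (\<Sum>l<m. A $$ (i,l) * X $$ (l,j))" by (rule mult_entry[OF A X i j])
  also have "\<dots> = (\<Sum>l<m. if l = j then A $$ (i,l) else 0)" by (rule sum.cong) (use c in auto)
  also have "\<dots> = A $$ (i,j)" using j by (subst sum.delta) auto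
  finally show ?thesis .
qed

lemma lam_last_nz:
  fixes Y :: "complex mat"
  assumes Y: "Y \<in> carrier_mat (Suc n) (Suc n)" and v: "v \<in> carrier_vec (Suc n)" "v \<noteq> 0\<^sub>v (Suc n)"
    and eig: "\<forall>j<Suc n. (\<Sum>i<Suc n. v $ i * Y $$ (i,j)) = \<rho> * v $ j"
    and dM: "det (Zm n \<rho> (ulm n n Y)) \<noteq> 0"
  shows "v $ n \<noteq> 0"
proof
  assume vn: "v $ n = 0"
  define w where "w = vec n (\<lambda>i. v $ i)"
  have wc: "w \<in> carrier_vec n" unfolding w_def by simp
  obtain i where i: "i < Suc n" "v $ i \<noteq> 0"
    using v by (metis dim_vec carrier_vecD eq_vecI index_zero_vec(1) index_zero_vec(2))
  then have "i < n" using vn less_Suc_eq by auto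
  then have wnz: "w \<noteq> 0\<^sub>v n" using i unfolding w_def by (metis index_vec index_zero_vec(1))
  have "transpose_mat (Zm n \<rho> (ulm n n Y)) *\<^sub>v w = 0\<^sub>v n"
  proof (rule eq_vecI)
    fix j assume "j < dim_vec (0\<^sub>v n :: complex vec)"
    then have j: "j < n" by simp
    have "(transpose_mat (Zm n \<rho> (ulm n n Y)) *\<^sub>v w) $ j = (\<Sum>i<n. ((if i = j then \<rho> else 0) - Y $$ (i,j)) * v $ i)"
      using j by (simp add: scalar_prod_def Zm_def w_def atLeast0LessThan)
    also have "\<dots> = (\<Sum>i<n. (if i = j then \<rho> * v $ i else 0) - v $ i * Y $$ (i,j))"
      by (rule sum.cong) (auto simp: algebra_simps)
    also have "\<dots> = (\<Sum>i<n. (if i = j then \<rho> * v $ i else 0)) - (\<Sum>i<n. v $ i * Y $$ (i,j))"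
      by (rule sum_subtractf)
    also have "(\<Sum>i<n. (if i = j then \<rho> * v $ i else 0)) = \<rho> * v $ j" using j by (subst sum.delta) auto
    also have "(\<Sum>i<n. v $ i * Y $$ (i,j)) = \<rho> * v $ j"
      using eig j vn by simp
    finally show "(transpose_mat (Zm n \<rho> (ulm n n Y)) *\<^sub>v w) $ j = 0\<^sub>v n $ j" using j by simp
  qed simp
  then have "det (transpose_mat (Zm n \<rho> (ulm n n Y))) = 0"
    using det_0_iff_vec_prod_zero_field[of "transpose_mat (Zm n \<rho> (ulm n n Y))" n] wc wnz by auto
  then show False using dM det_transpose[of "Zm n \<rho> (ulm n n Y)" n] by simp
qed

lemma T_construct:
  fixes Y :: "complex mat"
  assumes Y: "Y \<in> carrier_mat (Suc n) (Suc n)" and v: "v \<in> carrier_vec (Suc n)" and vn: "v $ n \<noteq> 0"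
    and eig: "\<forall>j<Suc n. (\<Sum>i<Suc n. v $ i * Y $$ (i,j)) = \<rho> * v $ j"
  shows "\<exists>T T'. T \<in> carrier_mat (Suc n) (Suc n) \<and> T' \<in> carrier_mat (Suc n) (Suc n) \<and> T * T' = 1\<^sub>m (Suc n)
     \<and> T' * T = 1\<^sub>m (Suc n) \<and> (\<forall>j<n. (T' * Y * T) $$ (n,j) = 0)
     \<and> (\<forall>W \<in> carrier_mat (Suc n) (Suc n). \<forall>i<n. (T' * W * T) $$ (i,n) = W $$ (i,n))"
proof -
  define m where "m = Suc n"
  define T' where "T' = mat m m (\<lambda>(i,k). if i = n then v $ k / v $ n else (if i = k then 1 else 0))"
  define T where "T = mat m m (\<lambda>(l,j). if l = n then (if j = n then 1 else - (v $ j / v $ n)) else (if l = j then 1 else 0))"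
  have Tc: "T \<in> carrier_mat m m" and T'c: "T' \<in> carrier_mat m m" unfolding T_def T'_def by auto
  have Ti: "T $$ (l,j) = (if l = j then 1 else 0)" if "l < n" "j < m" for l j using that unfolding T_def m_def by auto
  have Tn: "T $$ (n,j) = (if j = n then 1 else - (v $ j / v $ n))" if "j < m" for j using that unfolding T_def m_def by auto
  have T'i: "T' $$ (i,k) = (if i = k then 1 else 0)" if "i < n" "k < m" for i k using that unfolding T'_def m_def by auto
  have T'n: "T' $$ (n,k) = v $ k / v $ n" if "k < m" for k using that unfolding T'_def m_def by auto
  have Tcol: "\<forall>l<m. T $$ (l,n) = (if l = n then 1 else 0)"
    using Ti Tn unfolding m_def by (auto simp: less_Suc_eq)
  have nm: "n < m" unfolding m_def by simp
  have TT': "T * T' = 1\<^sub>m m"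
  proof (rule eq_matI)
    fix i k assume "i < dim_row (1\<^sub>m m :: complex mat)" "k < dim_col (1\<^sub>m m :: complex mat)"
    then have i: "i < m" and k: "k < m" by auto
    show "(T * T') $$ (i,k) = 1\<^sub>m m $$ (i,k)"
    proof (cases "i < n")
      case True
      then show ?thesis using row_id[OF Tc T'c i k] Ti T'i i k by simp
    next
      case False
      then have "i = n" using i unfolding m_def by simp
      have "(T * T') $$ (n,k) = (\<Sum>l<m. T $$ (n,l) * T' $$ (l,k))" by (rule mult_entry[OF Tc T'c nm k])
      also have "\<dots> = (\<Sum>l<n. T $$ (n,l) * T' $$ (l,k)) + T $$ (n,n) * T' $$ (n,k)" unfolding m_def by simp
      also have "(\<Sum>l<n. T $$ (n,l) * T' $$ (l,k)) = (\<Sum>l<n. if l = k then - (v $ k / v $ n) else 0)"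
        by (rule sum.cong) (use Tn T'i k nm in auto)
      also have "\<dots> = (if k < n then - (v $ k / v $ n) else 0)" by (subst sum.delta) auto
      finally show ?thesis using \<open>i = n\<close> Tn T'n k nm vn unfolding m_def by (auto simp: less_Suc_eq)
    qed
  qed (use Tc T'c in auto)
  have T'T: "T' * T = 1\<^sub>m m"
  proof (rule eq_matI)
    fix i j assume "i < dim_row (1\<^sub>m m :: complex mat)" "j < dim_col (1\<^sub>m m :: complex mat)"
    then have i: "i < m" and j: "j < m" by auto
    show "(T' * T) $$ (i,j) = 1\<^sub>m m $$ (i,j)"
    proof (cases "i < n")
      case True
      then show ?thesis using row_id[OF T'c Tc i j] Ti T'i i j by simp
    next
      case False
      then have "i = n" using i unfolding m_def by simp
      have "(T' * T) $$ (n,j) = (\<Sum>l<m. T' $$ (n,l) * T $$ (l,j))" by (rule mult_entry[OF T'c Tc nm j])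
      also have "\<dots> = (\<Sum>l<n. T' $$ (n,l) * T $$ (l,j)) + T' $$ (n,n) * T $$ (n,j)" unfolding m_def by simp
      also have "(\<Sum>l<n. T' $$ (n,l) * T $$ (l,j)) = (\<Sum>l<n. if l = j then v $ j / v $ n else 0)"
        by (rule sum.cong) (use Ti T'n j nm in auto)
      also have "\<dots> = (if j < n then v $ j / v $ n else 0)" by (subst sum.delta) auto
      finally show ?thesis using \<open>i = n\<close> Tn T'n j nm vn unfolding m_def by (auto simp: less_Suc_eq)
    qed
  qed (use Tc T'c in auto)
  have T'Y: "(T' * Y) $$ (n,l) = \<rho> * T' $$ (n,l)" if l: "l < m" for l
  proof -
    have "(T' * Y) $$ (n,l) = (\<Sum>k<m. T' $$ (n,k) * Y $$ (k,l))" by (rule mult_entry[OF T'c _ nm l]) (use Y m_def in simp)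
    also have "\<dots> = (\<Sum>k<m. v $ k * Y $$ (k,l)) / v $ n" using T'n by (simp add: sum_divide_distrib)
    also have "\<dots> = \<rho> * v $ l / v $ n" using eig l unfolding m_def by simp
    finally show ?thesis using T'n[OF l] by simp
  qed
  have low: "\<forall>j<n. (T' * Y * T) $$ (n,j) = 0"
  proof (intro allI impI)
    fix j assume jn: "j < n"
    then have j: "j < m" unfolding m_def by simp
    have YC: "T' * Y \<in> carrier_mat m m" using T'c Y unfolding m_def by simp
    have "(T' * Y * T) $$ (n,j) = (\<Sum>l<m. (T' * Y) $$ (n,l) * T $$ (l,j))" by (rule mult_entry[OF YC Tc nm j])
    also have "\<dots> = \<rho> * (\<Sum>l<m. T' $$ (n,l) * T $$ (l,j))" using T'Y by (simp add: sum_distrib_left mult.assoc)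
    also have "(\<Sum>l<m. T' $$ (n,l) * T $$ (l,j)) = (T' * T) $$ (n,j)" by (rule mult_entry[OF T'c Tc nm j, symmetric])
    also have "\<dots> = 0" unfolding T'T using jn j nm by simp
    finally show "(T' * Y * T) $$ (n,j) = 0" by simp
  qed
  have col: "\<forall>W \<in> carrier_mat (Suc n) (Suc n). \<forall>i<n. (T' * W * T) $$ (i,n) = W $$ (i,n)"
  proof (intro ballI allI impI)
    fix W :: "complex mat" and i assume W: "W \<in> carrier_mat (Suc n) (Suc n)" and i: "i < n"
    have im: "i < m" using i unfolding m_def by simp
    have WC: "T' * W \<in> carrier_mat m m" using T'c W unfolding m_def by simp
    have "(T' * W * T) $$ (i,n) = (T' * W) $$ (i,n)" by (rule col_id[OF WC Tc im nm Tcol])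
    also have "\<dots> = W $$ (i,n)" by (rule row_id[OF T'c _ im nm]) (use W T'i i m_def in auto)
    finally show "(T' * W * T) $$ (i,n) = W $$ (i,n)" .
  qed
  show ?thesis using Tc T'c TT' T'T low col unfolding m_def by blast
qed


definition PF :: "(complex \<Rightarrow> complex) set" where
  "PF = {g. \<exists>p. \<forall>e. g e = poly p e}"

lemma polyfun_PF: assumes "g \<in> polyfun PF" shows "\<exists>p. \<forall>e. g e = poly p e"
  using assms
proof (induction rule: polyfun.induct)
  case (pf_const c) show ?case by (rule exI[of _ "[:c:]"]) simp
next
  case (pf_coord f) then show ?case unfolding PF_def by simp
next
  case (pf_add f g)
  then obtain p q where "\<forall>e. f e = poly p e" "\<forall>e. g e = poly q e" by blast
  then show ?case by (intro exI[of _ "p + q"]) simp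
next
  case (pf_mult f g)
  then obtain p q where "\<forall>e. f e = poly p e" "\<forall>e. g e = poly q e" by blast
  then show ?case by (intro exI[of _ "p * q"]) simp
qed

lemma sh_poly: "semiring_hom (\<lambda>p::complex poly. poly p e)" by unfold_locales auto
lemma ch_poly: "comm_ring_hom (\<lambda>p::complex poly. poly p e)" by unfold_locales auto

lemma pert_poly:
  fixes B psi psib E :: "complex mat"
  assumes f: "f \<in> ringR K" and B: "B \<in> carrier_mat m m" and E: "E \<in> carrier_mat m m"
    and psi: "psi \<in> carrier_mat m K" and psib: "psib \<in> carrier_mat K m"
  shows "\<exists>p. \<forall>e. f (iN m K (B + e \<cdot>\<^sub>m E) psi psib) = poly p e"
proof -
  define cst where "cst = (\<lambda>x::complex. [:x:])"
  define Mp where "Mp = map_mat cst (B + psi * psib) + [:0,1:] \<cdot>\<^sub>m map_mat cst E"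
  define psip where "psip = map_mat cst psi"
  define psibp where "psibp = map_mat cst psib"
  have Mpc: "Mp \<in> carrier_mat m m" unfolding Mp_def using B E psi psib by simp
  have psipc: "psip \<in> carrier_mat m K" and psibpc: "psibp \<in> carrier_mat K m"
    unfolding psip_def psibp_def using psi psib by auto
  have f1: "map_mat (\<lambda>p. poly p e) Mp = Btil (B + e \<cdot>\<^sub>m E) psi psib" for e
    by (rule eq_matI) (use B E psi psib in \<open>auto simp: Mp_def Btil_def cst_def algebra_simps\<close>)
  have f2: "(1/2) \<cdot>\<^sub>m map_mat (\<lambda>p. poly p e) Mp = map_mat (\<lambda>p. poly p e) ([:1/2:] \<cdot>\<^sub>m Mp)" for e
    by (rule eq_matI) auto
  have f3: "map_mat (\<lambda>p. poly p e) psip = psi" "map_mat (\<lambda>p. poly p e) psibp = psib" for e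
    by (rule eq_matI, auto simp: psip_def psibp_def cst_def)+
  have Hc: "[:1/2:] \<cdot>\<^sub>m Mp \<in> carrier_mat m m" using Mpc by simp
  have xe: "fst (iN m K (B + e \<cdot>\<^sub>m E) psi psib) i a b
      = poly ((psibp * ([:1/2:] \<cdot>\<^sub>m Mp) ^\<^sub>m (i - 1) * psip) $$ (a,b)) e" if "1 \<le> i" "a < K" "b < K" for e i a b
  proof -
    have Pc: "([:1/2:] \<cdot>\<^sub>m Mp) ^\<^sub>m (i - 1) \<in> carrier_mat m m" using Hc by simp
    have Xc: "psibp * ([:1/2:] \<cdot>\<^sub>m Mp) ^\<^sub>m (i - 1) * psip \<in> carrier_mat K K"
      by (rule mult_carrier_mat[OF mult_carrier_mat[OF psibpc Pc] psipc])
    have "psib * ((1/2) \<cdot>\<^sub>m Btil (B + e \<cdot>\<^sub>m E) psi psib) ^\<^sub>m (i - 1) * psi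
        = map_mat (\<lambda>p. poly p e) (psibp * ([:1/2:] \<cdot>\<^sub>m Mp) ^\<^sub>m (i - 1) * psip)"
      unfolding f1[symmetric] f2
      unfolding semiring_hom.mat_hom_mult[OF sh_poly mult_carrier_mat[OF psibpc Pc] psipc]
        semiring_hom.mat_hom_mult[OF sh_poly psibpc Pc]
        semiring_hom.mat_hom_pow[OF sh_poly Hc] f3 ..
    moreover have "dim_row (psibp * ([:1/2:] \<cdot>\<^sub>m Mp) ^\<^sub>m (i - 1) * psip) = K"
      "dim_col (psibp * ([:1/2:] \<cdot>\<^sub>m Mp) ^\<^sub>m (i - 1) * psip) = K" using Xc by auto
    ultimately show ?thesis unfolding iN_def using that by simp
  qed
  have he: "snd (iN m K (B + e \<cdot>\<^sub>m E) psi psib) i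
      = (if i \<le> m then poly (coeff (char_poly Mp) (m - i)) e else 0)" for e i
  proof -
    have "char_poly (Btil (B + e \<cdot>\<^sub>m E) psi psib) = map_poly (\<lambda>p. poly p e) (char_poly Mp)"
      unfolding f1[symmetric] by (rule comm_ring_hom.char_poly_hom[OF ch_poly Mpc])
    then show ?thesis unfolding iN_def by (simp add: coeff_map_poly)
  qed
  have "(\<lambda>e. f (iN m K (B + e \<cdot>\<^sub>m E) psi psib)) \<in> polyfun PF"
  proof (rule ringR_compI[OF f])
    fix i a b :: nat assume "1 \<le> i" "a < K" "b < K"
    then have "(\<lambda>e. fst (iN m K (B + e \<cdot>\<^sub>m E) psi psib) i a b) \<in> PF" unfolding PF_def using xe by blast
    then show "(\<lambda>e. fst (iN m K (B + e \<cdot>\<^sub>m E) psi psib) i a b) \<in> polyfun PF" by (rule polyfun.pf_coord)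
  next
    fix i :: nat assume "1 \<le> i"
    have "(\<lambda>e. snd (iN m K (B + e \<cdot>\<^sub>m E) psi psib) i) \<in> PF" unfolding PF_def he
      by (cases "i \<le> m") (auto intro: exI[of _ 0])
    then show "(\<lambda>e. snd (iN m K (B + e \<cdot>\<^sub>m E) psi psib) i) \<in> polyfun PF" by (rule polyfun.pf_coord)
  qed
  then show ?thesis by (rule polyfun_PF)
qed

lemma G_infinite:
  fixes Bt M :: "complex mat"
  assumes Bt: "Bt \<in> carrier_mat (Suc n) (Suc n)" and M: "M \<in> carrier_mat n n"
  shows "infinite {e. \<exists>\<rho>. poly (char_poly M) \<rho> \<noteq> 0 \<and> poly (char_poly Bt) \<rho> = e * poly (char_poly M) \<rho>}"
    (is "infinite ?G")
proof
  assume fin: "finite ?G"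
  have dM: "degree (char_poly M) = n" "coeff (char_poly M) n = 1" using degree_monic_char_poly[OF M] by auto
  have dB: "coeff (char_poly Bt) (Suc n) = 1" using degree_monic_char_poly[OF Bt] by auto
  have cM: "char_poly M \<noteq> 0" using dM by auto
  have R: "finite {r. poly (char_poly M) r = 0}" by (rule poly_roots_finite[OF cM])
  have Re: "finite {r. poly (char_poly Bt - Polynomial.smult e (char_poly M)) r = 0}" for e
  proof (rule poly_roots_finite)
    have "coeff (char_poly M) (Suc n) = 0" using dM by (simp add: coeff_eq_0)
    then have "coeff (char_poly Bt - Polynomial.smult e (char_poly M)) (Suc n) = 1" using dB by simp
    then show "char_poly Bt - Polynomial.smult e (char_poly M) \<noteq> 0" by auto
  qed
  have "UNIV \<subseteq> {r. poly (char_poly M) r = 0} \<union> (\<Union>e\<in>?G. {r. poly (char_poly Bt - Polynomial.smult e (char_poly M)) r = 0})"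
  proof
    fix r :: complex
    show "r \<in> {r. poly (char_poly M) r = 0} \<union> (\<Union>e\<in>?G. {r. poly (char_poly Bt - Polynomial.smult e (char_poly M)) r = 0})"
    proof (cases "poly (char_poly M) r = 0")
      case True then show ?thesis by simp
    next
      case False
      define e where "e = poly (char_poly Bt) r / poly (char_poly M) r"
      have "e \<in> ?G" unfolding e_def using False by auto
      moreover have "poly (char_poly Bt - Polynomial.smult e (char_poly M)) r = 0" unfolding e_def using False by simp
      ultimately show ?thesis by blast
    qed
  qed
  moreover have "finite ({r. poly (char_poly M) r = 0} \<union> (\<Union>e\<in>?G. {r. poly (char_poly Bt - Polynomial.smult e (char_poly M)) r = 0}))"
    using R Re fin by blast
  ultimately have "finite (UNIV :: complex set)" by (rule finite_subset)
  then show False using infinite_UNIV_char_0 by blast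
qed


lemma conj_sum:
  fixes T' B T psi psib :: "complex mat"
  assumes T': "T' \<in> carrier_mat m m" and B: "B \<in> carrier_mat m m" and T: "T \<in> carrier_mat m m"
    and psi: "psi \<in> carrier_mat m K" and psib: "psib \<in> carrier_mat K m"
  shows "T' * B * T + (T' * psi) * (psib * T) = T' * (B + psi * psib) * T"
    and "(T' * psi) * (psib * T) = T' * (psi * psib) * T"
proof -
  show e: "(T' * psi) * (psib * T) = T' * (psi * psib) * T"
    using T' psi psib T assoc_mult_mat[of T' m m psi K "psib * T" m] assoc_mult_mat[of psi m K psib m T m]
        assoc_mult_mat[of T' m m "psi * psib" m T m] by simp
  have "T' * (B + psi * psib) * T = T' * B * T + T' * (psi * psib) * T"
    using T' B psi psib T
    by (simp add: mult_add_distrib_mat[of T' m m] add_mult_distrib_mat[of "T'*B" m m "T'*(psi*psib)" T m])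
  then show "T' * B * T + (T' * psi) * (psib * T) = T' * (B + psi * psib) * T" unfolding e by simp
qed

lemma density:
  fixes B psi psib :: "complex mat"
  assumes f: "f \<in> ringR K"
    and HS: "\<And>B psi psib. B \<in> carrier_mat (Suc n) (Suc n) \<Longrightarrow> psi \<in> carrier_mat (Suc n) K
        \<Longrightarrow> psib \<in> carrier_mat K (Suc n) \<Longrightarrow> (\<forall>j<n. (B + psi * psib) $$ (n,j) = 0)
        \<Longrightarrow> (\<forall>i<n. B $$ (i,n) = (psi * psib) $$ (i,n)) \<Longrightarrow> f (iN (Suc n) K B psi psib) = 0"
    and B: "B \<in> carrier_mat (Suc n) (Suc n)" and psi: "psi \<in> carrier_mat (Suc n) K"
    and psib: "psib \<in> carrier_mat K (Suc n)"
  shows "f (iN (Suc n) K B psi psib) = 0"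
proof -
  define m where "m = Suc n"
  have nm: "n < m" unfolding m_def by simp
  obtain S T where Sc: "S \<in> carrier_mat m m" and Tc: "T \<in> carrier_mat m m" and ST: "S * T = 1\<^sub>m m"
    and TS: "T * S = 1\<^sub>m m"
    and up: "\<forall>i j. i < j \<longrightarrow> j < m \<longrightarrow> (T * B * S) $$ (i,j) = ((T * psi) * (psib * S)) $$ (i,j)"
    using schur_step[OF B[folded m_def] psi[folded m_def] psib[folded m_def]] by blast
  define B0 where "B0 = T * B * S"
  define psi0 where "psi0 = T * psi"
  define psib0 where "psib0 = psib * S"
  have B0c: "B0 \<in> carrier_mat m m" and psi0c: "psi0 \<in> carrier_mat m K" and psib0c: "psib0 \<in> carrier_mat K m"
    unfolding B0_def psi0_def psib0_def using Tc Sc B psi psib m_def by auto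
  have h2: "\<forall>i<n. B0 $$ (i,n) = (psi0 * psib0) $$ (i,n)"
    using up nm unfolding B0_def psi0_def psib0_def by auto
  have conj0: "iN m K B0 psi0 psib0 = iN m K B psi psib"
    unfolding B0_def psi0_def psib0_def by (rule iN_conj[OF B[folded m_def] psi[folded m_def] psib[folded m_def] Sc Tc ST TS])
  define E where "E = mat m m (\<lambda>(i,j). if i = n \<and> j = n then 1 else 0 :: complex)"
  have Ec: "E \<in> carrier_mat m m" unfolding E_def by simp
  define Bt0 where "Bt0 = B0 + psi0 * psib0"
  have Bt0c: "Bt0 \<in> carrier_mat m m" unfolding Bt0_def using B0c psi0c psib0c by simp
  define M where "M = ulm n n Bt0"
  have Mc: "M \<in> carrier_mat n n" unfolding M_def by simp
  define G where "G = {e. \<exists>\<rho>. poly (char_poly M) \<rho> \<noteq> 0 \<and> poly (char_poly Bt0) \<rho> = e * poly (char_poly M) \<rho>}"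
  have Ginf: "infinite G" unfolding G_def by (rule G_infinite[OF Bt0c[unfolded m_def] Mc])
  have good: "f (iN m K (B0 + e \<cdot>\<^sub>m E) psi0 psib0) = 0" if "e \<in> G" for e
  proof -
    from that obtain \<rho> where pM: "poly (char_poly M) \<rho> \<noteq> 0"
      and eq: "poly (char_poly Bt0) \<rho> = e * poly (char_poly M) \<rho>" unfolding G_def by blast
    define Be where "Be = B0 + e \<cdot>\<^sub>m E"
    define Bte where "Bte = Be + psi0 * psib0"
    have Bec: "Be \<in> carrier_mat m m" unfolding Be_def using B0c Ec by simp
    have Btec: "Bte \<in> carrier_mat m m" unfolding Bte_def using Bec psi0c psib0c by simp
    have Bte_e: "Bte $$ (i,j) = Bt0 $$ (i,j) + (if i = n \<and> j = n then e else 0)" if "i < m" "j < m" for i j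
      unfolding Bte_def Be_def Bt0_def E_def using that B0c psi0c psib0c by simp
    have ulmM: "ulm n n Bte = M"
      by (rule eq_matI) (use Bte_e nm in \<open>auto simp: M_def m_def\<close>)
    have "det (Zm m \<rho> Bte) = det (Zm m \<rho> Bt0) + (- e) * det (mat_delete (Zm m \<rho> Bt0) n n)"
      by (rule det_pert[OF Zm_carrier Zm_carrier nm]) (use Bte_e in \<open>auto simp: Zm_def\<close>)
    also have "mat_delete (Zm m \<rho> Bt0) n n = Zm n \<rho> M"
      by (rule eq_matI) (use nm in \<open>auto simp: mat_delete_def Zm_def M_def m_def\<close>)
    also have "det (Zm m \<rho> Bt0) = poly (char_poly Bt0) \<rho>" by (rule char_poly_det[OF Bt0c, symmetric])
    also have "det (Zm n \<rho> M) = poly (char_poly M) \<rho>" by (rule char_poly_det[OF Mc, symmetric])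
    finally have d0: "det (Zm m \<rho> Bte) = 0" using eq by simp
    obtain v where v: "v \<in> carrier_vec m" "v \<noteq> 0\<^sub>v m"
      and eig: "\<forall>j<m. (\<Sum>i<m. v $ i * Bte $$ (i,j)) = \<rho> * v $ j"
      using left_eig[OF Btec d0] by blast
    have dM: "det (Zm n \<rho> (ulm n n Bte)) \<noteq> 0" unfolding ulmM using pM char_poly_det[OF Mc] by simp
    have vn: "v $ n \<noteq> 0" by (rule lam_last_nz[OF Btec[unfolded m_def] v[unfolded m_def] eig[unfolded m_def] dM])
    obtain Tm T'm where Tmc: "Tm \<in> carrier_mat m m" and T'mc: "T'm \<in> carrier_mat m m"
      and TT': "Tm * T'm = 1\<^sub>m m" and T'T: "T'm * Tm = 1\<^sub>m m"
      and low: "\<forall>j<n. (T'm * Bte * Tm) $$ (n,j) = 0"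
      and col: "\<forall>W \<in> carrier_mat m m. \<forall>i<n. (T'm * W * Tm) $$ (i,n) = W $$ (i,n)"
      using T_construct[OF Btec[unfolded m_def] v(1)[unfolded m_def] vn eig[unfolded m_def]] unfolding m_def by blast
    note CS = conj_sum[OF T'mc Bec Tmc psi0c psib0c]
    have H1: "\<forall>j<n. (T'm * Be * Tm + (T'm * psi0) * (psib0 * Tm)) $$ (n,j) = 0"
      unfolding CS(1) using low unfolding Bte_def .
    have H2: "\<forall>i<n. (T'm * Be * Tm) $$ (i,n) = ((T'm * psi0) * (psib0 * Tm)) $$ (i,n)"
    proof (intro allI impI)
      fix i assume i: "i < n"
      have "(T'm * Be * Tm) $$ (i,n) = Be $$ (i,n)" using col Bec i by blast
      also have "\<dots> = B0 $$ (i,n)" unfolding Be_def E_def using B0c i nm by simp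
      also have "\<dots> = (psi0 * psib0) $$ (i,n)" using h2 i by blast
      also have "\<dots> = (T'm * (psi0 * psib0) * Tm) $$ (i,n)" using col psi0c psib0c i by simp
      finally show "(T'm * Be * Tm) $$ (i,n) = ((T'm * psi0) * (psib0 * Tm)) $$ (i,n)" unfolding CS(2) .
    qed
    have "f (iN (Suc n) K (T'm * Be * Tm) (T'm * psi0) (psib0 * Tm)) = 0"
      by (rule HS[OF _ _ _ H1 H2]) (use T'mc Bec Tmc psi0c psib0c m_def in auto)
    moreover have "iN m K (T'm * Be * Tm) (T'm * psi0) (psib0 * Tm) = iN m K Be psi0 psib0"
      by (rule iN_conj[OF Bec psi0c psib0c Tmc T'mc TT' T'T])
    ultimately show ?thesis unfolding Be_def m_def by simp
  qed
  obtain p where p: "\<forall>e. f (iN m K (B0 + e \<cdot>\<^sub>m E) psi0 psib0) = poly p e"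
    using pert_poly[OF f B0c Ec psi0c psib0c] by blast
  have "p = 0"
  proof (rule ccontr)
    assume "p \<noteq> 0"
    then have "finite {x. poly p x = 0}" by (rule poly_roots_finite)
    moreover have "G \<subseteq> {x. poly p x = 0}" using good p by auto
    ultimately show False using Ginf finite_subset by blast
  qed
  then have "f (iN m K (B0 + 0 \<cdot>\<^sub>m E) psi0 psib0) = 0" using p by simp
  moreover have "B0 + 0 \<cdot>\<^sub>m E = B0" by (rule eq_matI) (use B0c Ec in auto)
  ultimately show ?thesis using conj0 unfolding m_def by simp
qed

lemma main_claim:
  assumes "f \<in> ringR K" "\<forall>P\<in>YN K N. f (multN K N P) = 0"
    and "B \<in> carrier_mat N N" "psi \<in> carrier_mat N K" "psib \<in> carrier_mat K N"
  shows "f (iN N K B psi psib) = 0"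
  using assms
proof (induction N arbitrary: f B psi psib)
  case 0
  have "f (iN 0 K B psi psib) = f unitG" by (rule ringR_validEq[OF 0(1) iN0_unit[OF 0(3-5)]])
  also have "\<dots> = f (multN K 0 (\<lambda>_. iN 1 K (0\<^sub>m 1 1) (0\<^sub>m 1 K) (0\<^sub>m K 1)))" by simp
  also have "\<dots> = 0" using 0(2) YN_ne by blast
  finally show ?case .
next
  case (Suc n)
  have fR: "f \<in> ringR K" by (rule Suc.prems(1))
  have G: "f (mulG K (iN n K B1 psi1 psib1) q) = 0"
    if q: "q \<in> Yset K" and c1: "B1 \<in> carrier_mat n n" "psi1 \<in> carrier_mat n K" "psib1 \<in> carrier_mat K n"
    for q B1 psi1 psib1
  proof -
    define g where "g = (\<lambda>p. f (mulG K p q))"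
    have gR: "g \<in> ringR K" unfolding g_def by (rule mulG_fixed_poly[OF fR])
    have "\<forall>P\<in>YN K n. g (multN K n P) = 0"
    proof
      fix P assume P: "P \<in> YN K n"
      define P' where "P' = P(n := q)"
      have P'Y: "P' \<in> YN K (Suc n)" using P q unfolding P'_def YN_def by (auto simp: less_Suc_eq)
      have "multN K n P' = multN K n P" by (rule multN_cong) (simp add: P'_def)
      then have "multN K (Suc n) P' = mulG K (multN K n P) q" by (simp add: P'_def)
      then show "g (multN K n P) = 0" unfolding g_def using Suc.prems(2) P'Y by metis
    qed
    then have "g (iN n K B1 psi1 psib1) = 0" using Suc.IH[OF gR _ c1] by blast
    then show ?thesis unfolding g_def .
  qed
  show ?case
  proof (rule density[OF fR _ Suc.prems(3-5)])
    fix B psi psib :: "complex mat"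
    assume c: "B \<in> carrier_mat (Suc n) (Suc n)" "psi \<in> carrier_mat (Suc n) K" "psib \<in> carrier_mat K (Suc n)"
      and h1: "\<forall>j<n. (B + psi * psib) $$ (n,j) = 0" and h2: "\<forall>i<n. B $$ (i,n) = (psi * psib) $$ (i,n)"
    have "f (iN (Suc n) K B psi psib) = f (mulG K (iN n K (ulm n n B) (ulm n K psi) (ulm K n psib))
        (iN 1 K (lastB n B) (lastPsi n K psi) (lastPsib n K psib)))"
      by (rule ringR_validEq[OF fR FL[OF c h1 h2]])
    also have "\<dots> = 0" by (rule G[OF iN1_Yset[OF lastB_carrier lastPsi_carrier lastPsib_carrier]]) simp_all
    finally show "f (iN (Suc n) K B psi psib) = 0" .
  qed
qed

theorem mainTheorem17:
  fixes N K :: nat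
  shows "idealJ N K = {f \<in> ringR K. DeltaN K N f \<in> sumJ1 K N}"
proof
  show "idealJ N K \<subseteq> {f \<in> ringR K. DeltaN K N f \<in> sumJ1 K N}"
  proof
    fix f assume f: "f \<in> idealJ N K"
    then have "f \<in> ringR K" unfolding idealJ_def by simp
    then show "f \<in> {f \<in> ringR K. DeltaN K N f \<in> sumJ1 K N}" using subset_dir[OF f] by simp
  qed
next
  show "{f \<in> ringR K. DeltaN K N f \<in> sumJ1 K N} \<subseteq> idealJ N K"
  proof
    fix f assume "f \<in> {f \<in> ringR K. DeltaN K N f \<in> sumJ1 K N}"
    then have fR: "f \<in> ringR K" and D: "DeltaN K N f \<in> sumJ1 K N" by auto
    have "\<forall>P\<in>YN K N. f (multN K N P) = 0"
      using sumJ1_vanish[OF D] unfolding DeltaN_def by blast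
    then have "f (iN N K B psi psib) = 0"
      if "B \<in> carrier_mat N N" "psi \<in> carrier_mat N K" "psib \<in> carrier_mat K N" for B psi psib
      using main_claim[OF fR _ that] by blast
    then show "f \<in> idealJ N K" unfolding idealJ_def using fR by blast
  qed
qed


end
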